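(* For every $\nu\in\mathcal{S}^1$, the function $(\ell,h)\mapsto\psi(\ell,h,\nu)$ on $(0,+\infty)\times(0,+\infty)$ is constant.
   Context: Lattice: $\hat e_1=(1,0)$, $\hat e_2=\tfrac12(1,\sqrt3)$, $\hat e_3=\tfrac12(-1,\sqrt3)$, $\mathcal{L}=\{z_1\hat e_1+z_2\hat e_2\colon z\in\mathbb{Z}^2\}$, $\mathcal{L}^1=\{z_1(\hat e_1+\hat e_2)+z_2(\hat e_2+\hat e_3)\colon z\in\mathbb{Z}^2\}$, $\mathcal{L}^2=\mathcal{L}^1+\hat e_1$, $\mathcal{L}^3=\mathcal{L}^1+\hat e_2$. $\mathcal{T}(\mathbb{R}^2)$: closed triangles $\mathrm{conv}\{i,j,k\}$, $i,j,k\in\mathcal L$ pairwise at distance 1, labelled $i\in\mathcal{L}^1,j\in\mathcal{L}^2,k\in\mathcal{L}^3$. For $\varepsilon>0$: $\mathcal{L}_\varepsilon=\varepsilon\mathcal{L}$, $\mathcal{T}_\varepsilon(\mathbb{R}^2)=\varepsilon\mathcal{T}(\mathbb{R}^2)$, $\mathcal{T}_\varepsilon(A)=\{T\in\mathcal{T}_\varepsilon(\mathbb{R}^2)\colon T\subset A\}$, $\mathcal{SF}_\varepsilon=\{u\colon\mathcal{L}_\varepsilon\to\mathcal{S}^1\}$. $F_\varepsilon(u,T)=\varepsilon|u(\varepsilon i)+u(\varepsilon j)+u(\varepsilon k)|^2$, $F_\varepsilon(u,A)=\sum_{T\in\mathcal{T}_\varepsilon(A)}F_\varepsilon(u,T)$.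 With $v\times w=v_1w_2-v_2w_1$, $\chi(u,T)=\frac{2}{3\sqrt3}\big(u(\varepsilon i)\times u(\varepsilon j)+u(\varepsilon j)\times u(\varepsilon k)+u(\varepsilon k)\times u(\varepsilon i)\big)$ and $\chi(u)$ equals $\chi(u,T)$ on the interior of each $T$. For $\nu\in\mathcal S^1$: $\nu^\perp=(-\nu_2,\nu_1)$, $R^\nu_{\ell,h}=\{x\colon|\langle x,\nu^\perp\rangle|<\ell/2,\ |\langle x,\nu\rangle|<h/2\}$, $\chi_\nu(x)=1$ if $\langle x,\nu\rangle\ge0$ and $-1$ otherwise, and $\psi(\ell,h,\nu)=\frac1\ell\inf\{\liminf_{\varepsilon\to0}F_\varepsilon(u_\varepsilon,R^\nu_{\ell,h})\colon \chi(u_\varepsilon)\to\chi_\nu\text{ in }L^1(R^\nu_{\ell,h})\}\in[0,+\infty]$, the infimum over all sequences $\varepsilon\to0$ and $u_\varepsilon\in\mathcal{SF}_\varepsilon$. *)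

theory Defs
  imports "HOL-Analysis.Analysis"
begin

type_synonym pt = "real \<times> real"

definition e1 :: pt where "e1 = (1, 0)"
definition e2 :: pt where "e2 = (1/2, sqrt 3 / 2)"
definition e3 :: pt where "e3 = (-1/2, sqrt 3 / 2)"

definition Lat :: "pt set" where
  "Lat = {of_int z1 *\<^sub>R e1 + of_int z2 *\<^sub>R e2 | z1 z2. True}"

definition Lat1 :: "pt set" where
  "Lat1 = {of_int z1 *\<^sub>R (e1 + e2) + of_int z2 *\<^sub>R (e2 + e3) | z1 z2. True}"

definition Lat2 :: "pt set" where "Lat2 = (\<lambda>x. x + e1) ` Lat1"
definition Lat3 :: "pt set" where "Lat3 = (\<lambda>x. x + e2) ` Lat1"

text \<open>Labelled unit triangles of the reference lattice: triples (i,j,k) with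
  i in Lat1, j in Lat2, k in Lat3, pairwise at distance 1. Each triangle
  conv{i,j,k} in T(R^2) corresponds to exactly one such triple.\<close>
definition tri :: "(pt \<times> pt \<times> pt) set" where
  "tri = {(i, j, k). i \<in> Lat1 \<and> j \<in> Lat2 \<and> k \<in> Lat3 \<and>
            dist i j = 1 \<and> dist j k = 1 \<and> dist k i = 1}"

definition triangle :: "real \<Rightarrow> pt \<times> pt \<times> pt \<Rightarrow> pt set" where
  "triangle eps t = (case t of (i, j, k) \<Rightarrow>
      convex hull {eps *\<^sub>R i, eps *\<^sub>R j, eps *\<^sub>R k})"

definition triA :: "real \<Rightarrow> pt set \<Rightarrow> (pt \<times> pt \<times> pt) set" where
  "triA eps A = {t \<in> tri. triangle eps t \<subseteq> A}"

text \<open>Spin fields u : eps L -> S^1 (values off eps L are irrelevant).\<close>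
definition spin_field :: "real \<Rightarrow> (pt \<Rightarrow> pt) \<Rightarrow> bool" where
  "spin_field eps u \<longleftrightarrow> (\<forall>x \<in> Lat. norm (u (eps *\<^sub>R x)) = 1)"

definition FT :: "real \<Rightarrow> (pt \<Rightarrow> pt) \<Rightarrow> pt \<times> pt \<times> pt \<Rightarrow> real" where
  "FT eps u t = (case t of (i, j, k) \<Rightarrow>
      eps * (norm (u (eps *\<^sub>R i) + u (eps *\<^sub>R j) + u (eps *\<^sub>R k)))\<^sup>2)"

definition FA :: "real \<Rightarrow> (pt \<Rightarrow> pt) \<Rightarrow> pt set \<Rightarrow> real" where
  "FA eps u A = (\<Sum>t \<in> triA eps A. FT eps u t)"

definition cross :: "pt \<Rightarrow> pt \<Rightarrow> real" where
  "cross v w = fst v * snd w - snd v * fst w"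

definition chiT :: "real \<Rightarrow> (pt \<Rightarrow> pt) \<Rightarrow> pt \<times> pt \<times> pt \<Rightarrow> real" where
  "chiT eps u t = (case t of (i, j, k) \<Rightarrow>
      2 / (3 * sqrt 3) * (cross (u (eps *\<^sub>R i)) (u (eps *\<^sub>R j))
                        + cross (u (eps *\<^sub>R j)) (u (eps *\<^sub>R k))
                        + cross (u (eps *\<^sub>R k)) (u (eps *\<^sub>R i))))"

text \<open>Piecewise constant chirality: equal to chiT on the interior of each
  triangle; set to 0 on the (null) union of triangle boundaries.\<close>
definition chi :: "real \<Rightarrow> (pt \<Rightarrow> pt) \<Rightarrow> pt \<Rightarrow> real" where
  "chi eps u x = (if \<exists>t \<in> tri. x \<in> interior (triangle eps t)
      then chiT eps u (SOME t. t \<in> tri \<and> x \<in> interior (triangle eps t))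
      else 0)"

definition perp :: "pt \<Rightarrow> pt" where "perp v = (- snd v, fst v)"

definition rect :: "pt \<Rightarrow> real \<Rightarrow> real \<Rightarrow> pt set" where
  "rect \<nu> l h = {x. \<bar>x \<bullet> perp \<nu>\<bar> < l / 2 \<and> \<bar>x \<bullet> \<nu>\<bar> < h / 2}"

definition chi_nu :: "pt \<Rightarrow> pt \<Rightarrow> real" where
  "chi_nu \<nu> x = (if x \<bullet> \<nu> \<ge> 0 then 1 else -1)"

definition psi :: "real \<Rightarrow> real \<Rightarrow> pt \<Rightarrow> ereal" where
  "psi l h \<nu> = ereal (1 / l) *
     Inf {liminf (\<lambda>n. ereal (FA (eps n) (u n) (rect \<nu> l h))) | eps u.
            (\<forall>n. eps n > 0) \<and> eps \<longlonglongrightarrow> 0 \<and> (\<forall>n. spin_field (eps n) (u n)) \<and>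
            (\<lambda>n. \<integral>\<^sup>+ x. ennreal (indicator (rect \<nu> l h) x * \<bar>chi (eps n) (u n) x - chi_nu \<nu> x\<bar>) \<partial>lborel)
              \<longlonglongrightarrow> 0}"

end

theory Submission
  imports Defs
begin

definition ca :: "pt \<Rightarrow> real" where "ca p = fst p - snd p / sqrt 3"
definition cb :: "pt \<Rightarrow> real" where "cb p = 2 * snd p / sqrt 3"

lemma s3: "sqrt 3 * sqrt 3 = (3::real)" by simp
lemma s3pos: "sqrt 3 > (0::real)" by simp

lemma ca_lin[simp]: "ca (p + q) = ca p + ca q" "ca (c *\<^sub>R p) = c * ca p" "ca (p - q) = ca p - ca q" "ca (-p) = - ca p"
  by (auto simp: ca_def field_simps)
lemma cb_lin[simp]: "cb (p + q) = cb p + cb q" "cb (c *\<^sub>R p) = c * cb p" "cb (p - q) = cb p - cb q" "cb (-p) = - cb p"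
  by (auto simp: cb_def field_simps)
lemma ce[simp]: "ca e1 = 1" "cb e1 = 0" "ca e2 = 0" "cb e2 = 1" "ca e3 = -1" "cb e3 = 1"
  using s3 by (auto simp: ca_def cb_def e1_def e2_def e3_def field_simps)

lemma pt_repr: "p = ca p *\<^sub>R e1 + cb p *\<^sub>R e2"
  using s3 by (cases p) (auto simp: ca_def cb_def e1_def e2_def field_simps)

lemma pt_eqI: "ca p = ca q \<Longrightarrow> cb p = cb q \<Longrightarrow> p = q"
  by (metis pt_repr)

lemma dist_sq: "(dist p q)^2 = (ca p - ca q)^2 + (ca p - ca q)*(cb p - cb q) + (cb p - cb q)^2"
proof -
  obtain a b c d where "p = (a,b)" "q = (c,d)" by (cases p, cases q)
  moreover have "(dist p q)^2 = (a-c)^2 + (b-d)^2" using \<open>p = (a,b)\<close> \<open>q = (c,d)\<close>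
    by (simp add: dist_Pair_Pair dist_real_def)
  moreover have "(ca p - ca q)^2 + (ca p - ca q)*(cb p - cb q) + (cb p - cb q)^2 = (a-c)^2 + (b-d)^2"
    using \<open>p = (a,b)\<close> \<open>q = (c,d)\<close> by (simp add: ca_def cb_def power2_eq_square field_simps)
  ultimately show ?thesis by simp
qed

lemma Lat1_coords: "p \<in> Lat1 \<Longrightarrow> \<exists>(z1::int) (z2::int). ca p = z1 - z2 \<and> cb p = z1 + 2*z2"
proof -
  assume "p \<in> Lat1"
  then obtain z1 z2 :: int where "p = of_int z1 *\<^sub>R (e1 + e2) + of_int z2 *\<^sub>R (e2 + e3)" unfolding Lat1_def by blast
  then show ?thesis by (intro exI[of _ z1] exI[of _ z2]) simp
qed
lemma Lat2_coords: "p \<in> Lat2 \<Longrightarrow> \<exists>(z1::int) (z2::int). ca p = z1 - z2 + 1 \<and> cb p = z1 + 2*z2"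
proof -
  assume "p \<in> Lat2"
  then obtain z1 z2 :: int where "p = of_int z1 *\<^sub>R (e1 + e2) + of_int z2 *\<^sub>R (e2 + e3) + e1" unfolding Lat2_def Lat1_def by blast
  then show ?thesis by (intro exI[of _ z1] exI[of _ z2]) simp
qed
lemma Lat3_coords: "p \<in> Lat3 \<Longrightarrow> \<exists>(z1::int) (z2::int). ca p = z1 - z2 \<and> cb p = z1 + 2*z2 + 1"
proof -
  assume "p \<in> Lat3"
  then obtain z1 z2 :: int where "p = of_int z1 *\<^sub>R (e1 + e2) + of_int z2 *\<^sub>R (e2 + e3) + e2" unfolding Lat3_def Lat1_def by blast
  then show ?thesis by (intro exI[of _ z1] exI[of _ z2]) simp
qed
lemma Lat_coords: "p \<in> Lat \<Longrightarrow> \<exists>(z1::int) (z2::int). ca p = z1 \<and> cb p = z2"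
proof -
  assume "p \<in> Lat"
  then obtain z1 z2 :: int where "p = of_int z1 *\<^sub>R e1 + of_int z2 *\<^sub>R e2" unfolding Lat_def by blast
  then show ?thesis by (intro exI[of _ z1] exI[of _ z2]) simp
qed

lemma int_norm1: fixes a b :: int assumes "a^2 + a*b + b^2 = 1"
  shows "\<bar>a\<bar> \<le> 1 \<and> \<bar>b\<bar> \<le> 1 \<and> \<bar>a+b\<bar> \<le> 1"
proof -
  have "(2*a+b)^2 + 3*b^2 = 4" using assms by (simp add: power2_eq_square algebra_simps)
  hence "b^2 \<le> 1" by (smt (verit) zero_le_power2)
  hence b: "\<bar>b\<bar> \<le> 1" by (metis abs_le_square_iff abs_one one_power2 abs_abs power2_abs)
  have "(2*b+a)^2 + 3*a^2 = 4" using assms by (simp add: power2_eq_square algebra_simps)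
  hence "a^2 \<le> 1" by (smt (verit) zero_le_power2)
  hence a: "\<bar>a\<bar> \<le> 1" by (metis abs_le_square_iff abs_one one_power2 abs_abs power2_abs)
  have "a \<in> {-1,0,1}" "b \<in> {-1,0,1}" using a b by auto
  then show ?thesis using assms by (auto simp: power2_eq_square)
qed

lemma Lat_close:
  assumes "p \<in> Lat" "q \<in> Lat" "dist p q = 1"
  shows "\<bar>ca p - ca q\<bar> \<le> 1 \<and> \<bar>cb p - cb q\<bar> \<le> 1 \<and> \<bar>(ca p + cb p) - (ca q + cb q)\<bar> \<le> 1"
proof -
  obtain a1 b1 a2 b2 :: int where c: "ca p = a1" "cb p = b1" "ca q = a2" "cb q = b2"
    using Lat_coords assms by metis
  have "(a1-a2)^2 + (a1-a2)*(b1-b2) + (b1-b2)^2 = 1"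
  proof -
    have "real_of_int ((a1-a2)^2 + (a1-a2)*(b1-b2) + (b1-b2)^2) = (dist p q)^2"
      using dist_sq[of p q] c by simp
    then have "real_of_int ((a1-a2)^2 + (a1-a2)*(b1-b2) + (b1-b2)^2) = real_of_int 1" using assms(3) by simp
    then show ?thesis by (rule of_int_eq_iff[THEN iffD1])
  qed
  from int_norm1[OF this] have "\<bar>a1-a2\<bar> \<le> 1 \<and> \<bar>b1-b2\<bar> \<le> 1 \<and> \<bar>(a1 - a2) + (b1-b2)\<bar> \<le> 1" .
  then show ?thesis using c
    by (smt (verit, best) of_int_abs of_int_add of_int_diff of_int_le_1_iff)
qed

lemma coset_eq:
  fixes z1 z2 w1 w2 :: int and \<alpha> \<beta> :: real
  assumes "ca p = z1 - z2 + \<alpha>" "cb p = z1 + 2*z2 + \<beta>"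
    "ca q = w1 - w2 + \<alpha>" "cb q = w1 + 2*w2 + \<beta>"
    "\<bar>ca p - ca q\<bar> < 2" "\<bar>cb p - cb q\<bar> < 2" "\<bar>(ca p + cb p) - (ca q + cb q)\<bar> < 2"
  shows "p = q"
proof -
  define A where "A = (z1 - z2) - (w1 - w2)"
  define B where "B = (z1 + 2*z2) - (w1 + 2*w2)"
  have A: "ca p - ca q = A" and B: "cb p - cb q = B" using assms by (auto simp: A_def B_def)
  have "\<bar>real_of_int A\<bar> < 2" "\<bar>real_of_int B\<bar> < 2" "\<bar>real_of_int A + real_of_int B\<bar> < 2"
    using assms(5-7) A B by (auto simp: algebra_simps)
  hence "\<bar>A\<bar> < 2" "\<bar>B\<bar> < 2" "\<bar>A + B\<bar> < 2" by (auto simp: abs_less_iff)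
  moreover have "B - A = 3 * (z2 - w2)" by (simp add: A_def B_def algebra_simps)
  ultimately have "A = 0 \<and> B = 0" by presburger
  then show ?thesis using A B by (intro pt_eqI) auto
qed

lemma interior_hull_strip:
  fixes w :: pt
  assumes "w \<noteq> 0" "\<And>y. y \<in> S \<Longrightarrow> \<bar>w \<bullet> y - c\<bar> \<le> r"
  shows "interior (convex hull S) \<subseteq> {x. \<bar>w \<bullet> x - c\<bar> < r}"
proof -
  have "convex hull S \<subseteq> {x. w \<bullet> x \<le> c + r} \<inter> {x. w \<bullet> x \<ge> c - r}"
  proof (rule hull_minimal)
    show "S \<subseteq> {x. w \<bullet> x \<le> c + r} \<inter> {x. w \<bullet> x \<ge> c - r}"
      using assms(2) by (force simp: abs_le_iff)
  qed (simp add: convex_Int convex_halfspace_le convex_halfspace_ge)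
  hence "interior (convex hull S) \<subseteq> interior ({x. w \<bullet> x \<le> c + r} \<inter> {x. w \<bullet> x \<ge> c - r})"
    by (rule interior_mono)
  also have "\<dots> = {x. w \<bullet> x < c + r} \<inter> {x. w \<bullet> x > c - r}"
    using assms(1) by (simp add: interior_Int)
  finally have "interior (convex hull S) \<subseteq> {x. w \<bullet> x < c + r} \<inter> {x. w \<bullet> x > c - r}" .
  thus ?thesis by (force simp: abs_less_iff)
qed

definition wa :: pt where "wa = (1, - 1 / sqrt 3)"
definition wb :: pt where "wb = (0, 2 / sqrt 3)"
lemma wa_inner: "wa \<bullet> x = ca x" by (cases x) (simp add: wa_def ca_def)
lemma wb_inner: "wb \<bullet> x = cb x" by (cases x) (simp add: wb_def cb_def)
lemma wab_inner: "(wa + wb) \<bullet> x = ca x + cb x" by (simp add: inner_add_left wa_inner wb_inner)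
lemma w_nz: "wa \<noteq> 0" "wb \<noteq> 0" "wa + wb \<noteq> 0"
  by (auto simp: wa_def wb_def zero_prod_def)

lemma tri_Lat: "(i,j,k) \<in> tri \<Longrightarrow> i \<in> Lat1 \<and> j \<in> Lat2 \<and> k \<in> Lat3 \<and> dist i j = 1 \<and> dist j k = 1 \<and> dist k i = 1"
  by (simp add: tri_def)

lemma Lat1_sub: "Lat1 \<subseteq> Lat"
proof
  fix p assume "p \<in> Lat1"
  then obtain z1 z2 :: int where "ca p = of_int z1 - of_int z2" "cb p = of_int z1 + 2 * of_int z2" using Lat1_coords by metis
  then have "p = of_int (z1 - z2) *\<^sub>R e1 + of_int (z1 + 2*z2) *\<^sub>R e2"
    using pt_repr[of p] by simp
  then show "p \<in> Lat" unfolding Lat_def by blast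
qed

lemma Lat2_sub: "Lat2 \<subseteq> Lat"
proof
  fix p assume "p \<in> Lat2"
  then obtain z1 z2 :: int where "ca p = of_int z1 - of_int z2 + 1" "cb p = of_int z1 + 2 * of_int z2" using Lat2_coords by metis
  then have "p = of_int (z1 - z2 + 1) *\<^sub>R e1 + of_int (z1 + 2*z2) *\<^sub>R e2"
    using pt_repr[of p] by simp
  then show "p \<in> Lat" unfolding Lat_def by blast
qed

lemma Lat3_sub: "Lat3 \<subseteq> Lat"
proof
  fix p assume "p \<in> Lat3"
  then obtain z1 z2 :: int where "ca p = of_int z1 - of_int z2" "cb p = of_int z1 + 2 * of_int z2 + 1" using Lat3_coords by metis
  then have "p = of_int (z1 - z2) *\<^sub>R e1 + of_int (z1 + 2*z2 + 1) *\<^sub>R e2"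
    using pt_repr[of p] by simp
  then show "p \<in> Lat" unfolding Lat_def by blast
qed

lemma tri_pairs:
  assumes "(i,j,k) \<in> tri" "v \<in> {i,j,k}" "v' \<in> {i,j,k}"
  shows "\<bar>ca v' - ca v\<bar> \<le> 1 \<and> \<bar>cb v' - cb v\<bar> \<le> 1 \<and> \<bar>(ca v' + cb v') - (ca v + cb v)\<bar> \<le> 1"
proof (cases "v = v'")
  case True then show ?thesis by simp
next
  case False
  have L: "i \<in> Lat" "j \<in> Lat" "k \<in> Lat" using tri_Lat[OF assms(1)] Lat1_sub Lat2_sub Lat3_sub by auto
  have D: "dist i j = 1" "dist j k = 1" "dist k i = 1" using tri_Lat[OF assms(1)] by auto
  have "v' \<in> Lat \<and> v \<in> Lat \<and> dist v' v = 1"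
    using assms(2,3) False L D by (auto simp: dist_commute)
  then show ?thesis using Lat_close by blast
qed

lemma tri_vertex_close:
  assumes t: "(i,j,k) \<in> tri" and eps: "eps > 0" and x: "x \<in> interior (triangle eps (i,j,k))"
    and v: "v \<in> {i,j,k}"
  shows "\<bar>ca x - eps * ca v\<bar> < eps \<and> \<bar>cb x - eps * cb v\<bar> < eps \<and> \<bar>(ca x + cb x) - eps * (ca v + cb v)\<bar> < eps"
proof -
  have T: "triangle eps (i,j,k) = convex hull {eps *\<^sub>R i, eps *\<^sub>R j, eps *\<^sub>R k}" by (simp add: triangle_def)
  have P: "\<bar>ca v' - ca v\<bar> \<le> 1 \<and> \<bar>cb v' - cb v\<bar> \<le> 1 \<and> \<bar>(ca v' + cb v') - (ca v + cb v)\<bar> \<le> 1" if "v' \<in> {i,j,k}" for v'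
    by (rule tri_pairs[OF t v that])
  have Y: "\<exists>v'\<in>{i,j,k}. y = eps *\<^sub>R v'" if "y \<in> {eps *\<^sub>R i, eps *\<^sub>R j, eps *\<^sub>R k}" for y
    using that by auto
  have sc: "\<bar>eps * a - eps * b\<bar> \<le> eps" if "\<bar>a - b\<bar> \<le> 1" for a b
  proof -
    have "\<bar>eps * a - eps * b\<bar> = \<bar>eps * (a - b)\<bar>" by (simp add: right_diff_distrib)
    also have "\<dots> = eps * \<bar>a - b\<bar>" using eps by (simp add: abs_mult)
    also have "\<dots> \<le> eps * 1" using that eps by (intro mult_left_mono) auto
    finally show ?thesis by simp
  qed
  have 1: "interior (convex hull {eps *\<^sub>R i, eps *\<^sub>R j, eps *\<^sub>R k}) \<subseteq> {x. \<bar>wa \<bullet> x - eps * ca v\<bar> < eps}"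
  proof (rule interior_hull_strip[OF w_nz(1)])
    fix y assume "y \<in> {eps *\<^sub>R i, eps *\<^sub>R j, eps *\<^sub>R k}"
    then obtain v' where "v' \<in> {i,j,k}" "y = eps *\<^sub>R v'" using Y by blast
    then show "\<bar>wa \<bullet> y - eps * ca v\<bar> \<le> eps" using P[of v'] sc by (simp add: wa_inner)
  qed
  have 2: "interior (convex hull {eps *\<^sub>R i, eps *\<^sub>R j, eps *\<^sub>R k}) \<subseteq> {x. \<bar>wb \<bullet> x - eps * cb v\<bar> < eps}"
  proof (rule interior_hull_strip[OF w_nz(2)])
    fix y assume "y \<in> {eps *\<^sub>R i, eps *\<^sub>R j, eps *\<^sub>R k}"
    then obtain v' where "v' \<in> {i,j,k}" "y = eps *\<^sub>R v'" using Y by blast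
    then show "\<bar>wb \<bullet> y - eps * cb v\<bar> \<le> eps" using P[of v'] sc by (simp add: wb_inner)
  qed
  have 3: "interior (convex hull {eps *\<^sub>R i, eps *\<^sub>R j, eps *\<^sub>R k}) \<subseteq> {x. \<bar>(wa + wb) \<bullet> x - eps * (ca v + cb v)\<bar> < eps}"
  proof (rule interior_hull_strip[OF w_nz(3)])
    fix y assume "y \<in> {eps *\<^sub>R i, eps *\<^sub>R j, eps *\<^sub>R k}"
    then obtain v' where "v' \<in> {i,j,k}" "y = eps *\<^sub>R v'" using Y by blast
    then show "\<bar>(wa + wb) \<bullet> y - eps * (ca v + cb v)\<bar> \<le> eps" using P[of v'] sc[of "ca v' + cb v'" "ca v + cb v"]
      by (simp add: wab_inner distrib_left)
  qed
  have x': "x \<in> interior (convex hull {eps *\<^sub>R i, eps *\<^sub>R j, eps *\<^sub>R k})" using x T by simp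
  show ?thesis using subsetD[OF 1 x'] subsetD[OF 2 x'] subsetD[OF 3 x'] by (simp add: wa_inner wb_inner wab_inner)
qed

lemma close_pair:
  assumes "eps > 0" "\<bar>ca x - eps * ca p\<bar> < eps \<and> \<bar>cb x - eps * cb p\<bar> < eps \<and> \<bar>(ca x + cb x) - eps * (ca p + cb p)\<bar> < eps"
    "\<bar>ca x - eps * ca q\<bar> < eps \<and> \<bar>cb x - eps * cb q\<bar> < eps \<and> \<bar>(ca x + cb x) - eps * (ca q + cb q)\<bar> < eps"
  shows "\<bar>ca p - ca q\<bar> < 2 \<and> \<bar>cb p - cb q\<bar> < 2 \<and> \<bar>(ca p + cb p) - (ca q + cb q)\<bar> < 2"
proof -
  have h: "\<bar>a - b\<bar> < 2" if "\<bar>y - eps * a\<bar> < eps" "\<bar>y - eps * b\<bar> < eps" for y a b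
  proof -
    have "eps * (a - b) < eps * 2" "eps * (b - a) < eps * 2" using that by (auto simp: abs_less_iff algebra_simps)
    hence "a - b < 2" "b - a < 2" using assms(1) by (simp_all only: mult_less_cancel_left_pos)
    then show ?thesis by (simp add: abs_less_iff)
  qed
  show ?thesis using h[of "ca x" "ca p" "ca q"] h[of "cb x" "cb p" "cb q"] h[of "ca x + cb x" "ca p + cb p" "ca q + cb q"] assms(2,3)
    by linarith
qed

lemma tri_unique:
  assumes "eps > 0" "t \<in> tri" "s \<in> tri" "x \<in> interior (triangle eps t)" "x \<in> interior (triangle eps s)"
  shows "t = s"
proof -
  obtain i j k where t: "t = (i,j,k)" by (cases t) auto
  obtain i' j' k' where s: "s = (i',j',k')" by (cases s) auto
  have ti: "(i,j,k) \<in> tri" "(i',j',k') \<in> tri" using assms t s by auto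
  have C: "\<bar>ca v - ca v'\<bar> < 2 \<and> \<bar>cb v - cb v'\<bar> < 2 \<and> \<bar>(ca v + cb v) - (ca v' + cb v')\<bar> < 2"
    if "v \<in> {i,j,k}" "v' \<in> {i',j',k'}" for v v'
  proof -
    have "x \<in> interior (triangle eps (i,j,k))" "x \<in> interior (triangle eps (i',j',k'))" using assms(4,5) t s by simp_all
    then show ?thesis
      by (rule close_pair[OF assms(1) tri_vertex_close[OF ti(1) assms(1) _ that(1)] tri_vertex_close[OF ti(2) assms(1) _ that(2)]])
  qed
  have "i = i'"
  proof -
    obtain z1 z2 w1 w2 :: int where "ca i = of_int z1 - of_int z2" "cb i = of_int z1 + 2 * of_int z2"
      "ca i' = of_int w1 - of_int w2" "cb i' = of_int w1 + 2 * of_int w2"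
      using Lat1_coords tri_Lat[OF ti(1)] tri_Lat[OF ti(2)] by metis
    then show ?thesis using coset_eq[of i z1 z2 0 0 i' w1 w2] C[of i i'] by simp
  qed
  moreover have "j = j'"
  proof -
    obtain z1 z2 w1 w2 :: int where "ca j = of_int z1 - of_int z2 + 1" "cb j = of_int z1 + 2 * of_int z2"
      "ca j' = of_int w1 - of_int w2 + 1" "cb j' = of_int w1 + 2 * of_int w2"
      using Lat2_coords tri_Lat[OF ti(1)] tri_Lat[OF ti(2)] by metis
    then show ?thesis using coset_eq[of j z1 z2 1 0 j' w1 w2] C[of j j'] by simp
  qed
  moreover have "k = k'"
  proof -
    obtain z1 z2 w1 w2 :: int where "ca k = of_int z1 - of_int z2" "cb k = of_int z1 + 2 * of_int z2 + 1"
      "ca k' = of_int w1 - of_int w2" "cb k' = of_int w1 + 2 * of_int w2 + 1"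
      using Lat3_coords tri_Lat[OF ti(1)] tri_Lat[OF ti(2)] by metis
    then show ?thesis using coset_eq[of k z1 z2 0 1 k' w1 w2] C[of k k'] by simp
  qed
  ultimately show ?thesis using t s by simp
qed

lemma chi_eq:
  assumes "eps > 0" "t \<in> tri" "x \<in> interior (triangle eps t)"
  shows "chi eps u x = chiT eps u t"
proof -
  have ex: "\<exists>t\<in>tri. x \<in> interior (triangle eps t)" using assms by blast
  have "(SOME t. t \<in> tri \<and> x \<in> interior (triangle eps t)) = t"
  proof (rule some_equality)
    show "t \<in> tri \<and> x \<in> interior (triangle eps t)" using assms by blast
    fix s assume "s \<in> tri \<and> x \<in> interior (triangle eps s)"
    then show "s = t" using tri_unique[OF assms(1)] assms by blast
  qed
  then show ?thesis using ex by (simp add: chi_def)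
qed

lemma chi_out:
  assumes "\<not> (\<exists>t\<in>tri. x \<in> interior (triangle eps t))"
  shows "chi eps u x = 0"
  using assms by (simp add: chi_def)

lemma chi_measurable:
  assumes "eps > 0"
  shows "chi eps u \<in> borel_measurable lborel"
proof -
  let ?U = "\<Union>t\<in>tri. interior (triangle eps t)"
  have "{w \<in> space lborel. chi eps u w < a} \<in> sets lborel" for a
  proof -
    have eq: "{w \<in> space lborel. chi eps u w < a} =
       (\<Union>t\<in>{t\<in>tri. chiT eps u t < a}. interior (triangle eps t)) \<union> (if 0 < a then - ?U else {})"
    proof (intro set_eqI iffI)
      fix w assume w: "w \<in> {w \<in> space lborel. chi eps u w < a}"
      show "w \<in> (\<Union>t\<in>{t\<in>tri. chiT eps u t < a}. interior (triangle eps t)) \<union> (if 0 < a then - ?U else {})"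
      proof (cases "\<exists>t\<in>tri. w \<in> interior (triangle eps t)")
        case True
        then obtain t where t: "t \<in> tri" "w \<in> interior (triangle eps t)" by blast
        then have "chiT eps u t < a" using w chi_eq[OF assms, of t w u] by simp
        then show ?thesis using t by blast
      next
        case False
        then show ?thesis using w chi_out[OF False, of u] by auto
      qed
    next
      fix w assume w: "w \<in> (\<Union>t\<in>{t\<in>tri. chiT eps u t < a}. interior (triangle eps t)) \<union> (if 0 < a then - ?U else {})"
      show "w \<in> {w \<in> space lborel. chi eps u w < a}"
      proof (cases "\<exists>t\<in>tri. w \<in> interior (triangle eps t)")
        case True
        then obtain t where t: "t \<in> tri" "w \<in> interior (triangle eps t)" by blast
        have "w \<notin> (if 0 < a then - ?U else {})" using t by auto
        then obtain s where "s \<in> tri" "chiT eps u s < a" "w \<in> interior (triangle eps s)" using w by auto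
        then show ?thesis using chi_eq[OF assms, of s w u] by auto
      next
        case False
        then have "w \<notin> (\<Union>t\<in>{t\<in>tri. chiT eps u t < a}. interior (triangle eps t))" by auto
        then have "0 < a" using w by (auto split: if_splits)
        then show ?thesis using chi_out[OF False, of u] by auto
      qed
    qed
    have o1: "open (\<Union>t\<in>{t\<in>tri. chiT eps u t < a}. interior (triangle eps t))" by auto
    have o2: "open ?U" by auto
    have "(\<Union>t\<in>{t\<in>tri. chiT eps u t < a}. interior (triangle eps t)) \<union> (if 0 < a then - ?U else {}) \<in> sets borel"
    proof (cases "0 < a")
      case True
      have "- ?U \<in> sets borel" using closed_Compl[OF o2] by (rule borel_closed)
      then show ?thesis using True o1 by (simp add: sets.Un borel_open)
    next
      case False
      then show ?thesis using o1 by (simp add: borel_open)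
    qed
    then show ?thesis unfolding eq by simp
  qed
  then show ?thesis by (simp add: borel_measurable_iff_less)
qed

lemma chi_nu_measurable: "chi_nu \<nu> \<in> borel_measurable lborel"
  unfolding chi_nu_def by measurable

lemma Lat_iff: "p \<in> Lat \<longleftrightarrow> (\<exists>(a::int) (b::int). ca p = a \<and> cb p = b)"
proof
  assume "p \<in> Lat" then show "\<exists>(a::int) (b::int). ca p = a \<and> cb p = b" by (rule Lat_coords)
next
  assume "\<exists>(a::int) (b::int). ca p = a \<and> cb p = b"
  then obtain a b :: int where "ca p = a" "cb p = b" by blast
  then have "p = of_int a *\<^sub>R e1 + of_int b *\<^sub>R e2" using pt_repr[of p] by simp
  then show "p \<in> Lat" unfolding Lat_def by blast
qed

lemma Lat1_add: assumes "a \<in> Lat1" "b \<in> Lat1" shows "a + b \<in> Lat1"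
proof -
  obtain z1 z2 :: int where a: "a = of_int z1 *\<^sub>R (e1 + e2) + of_int z2 *\<^sub>R (e2 + e3)" using assms(1) unfolding Lat1_def by blast
  obtain w1 w2 :: int where b: "b = of_int w1 *\<^sub>R (e1 + e2) + of_int w2 *\<^sub>R (e2 + e3)" using assms(2) unfolding Lat1_def by blast
  have "a + b = of_int (z1 + w1) *\<^sub>R (e1 + e2) + of_int (z2 + w2) *\<^sub>R (e2 + e3)"
    unfolding a b by (simp add: scaleR_add_left algebra_simps)
  then show ?thesis unfolding Lat1_def by blast
qed

lemma Lat1_uminus: assumes "a \<in> Lat1" shows "- a \<in> Lat1"
proof -
  obtain z1 z2 :: int where a: "a = of_int z1 *\<^sub>R (e1 + e2) + of_int z2 *\<^sub>R (e2 + e3)" using assms(1) unfolding Lat1_def by blast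
  have "- a = of_int (- z1) *\<^sub>R (e1 + e2) + of_int (- z2) *\<^sub>R (e2 + e3)"
    unfolding a by simp
  then show ?thesis unfolding Lat1_def by blast
qed

lemma Lat2_add: assumes "a \<in> Lat2" "s \<in> Lat1" shows "a + s \<in> Lat2"
proof -
  obtain b where "b \<in> Lat1" "a = b + e1" using assms(1) unfolding Lat2_def by blast
  then have "a + s = (b + s) + e1" "b + s \<in> Lat1" using Lat1_add assms(2) by (auto simp: algebra_simps)
  then show ?thesis unfolding Lat2_def by blast
qed

lemma Lat3_add: assumes "a \<in> Lat3" "s \<in> Lat1" shows "a + s \<in> Lat3"
proof -
  obtain b where "b \<in> Lat1" "a = b + e2" using assms(1) unfolding Lat3_def by blast
  then have "a + s = (b + s) + e2" "b + s \<in> Lat1" using Lat1_add assms(2) by (auto simp: algebra_simps)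
  then show ?thesis unfolding Lat3_def by blast
qed

lemma Lat_add: assumes "a \<in> Lat" "s \<in> Lat1" shows "a + s \<in> Lat"
proof -
  have "s \<in> Lat" using assms(2) Lat1_sub by blast
  then obtain a1 b1 a2 b2 :: int where "ca a = a1" "cb a = b1" "ca s = a2" "cb s = b2"
    using assms(1) Lat_coords by metis
  then have "ca (a + s) = of_int (a1 + a2)" "cb (a + s) = of_int (b1 + b2)" by simp_all
  then show ?thesis unfolding Lat_iff by blast
qed

definition shift :: "pt \<Rightarrow> pt \<times> pt \<times> pt \<Rightarrow> pt \<times> pt \<times> pt" where
  "shift s t = (case t of (i,j,k) \<Rightarrow> (i + s, j + s, k + s))"

lemma shift_simp[simp]: "shift s (i,j,k) = (i + s, j + s, k + s)" by (simp add: shift_def)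

lemma tri_shift: assumes "s \<in> Lat1" "t \<in> tri" shows "shift s t \<in> tri"
proof -
  obtain i j k where t: "t = (i,j,k)" by (cases t) auto
  show ?thesis using assms t Lat1_add Lat2_add Lat3_add
    by (auto simp: tri_def dist_add_cancel2)
qed

lemma shift_shift: "shift (- s) (shift s t) = t"
  by (cases t) auto

lemma shift_inj: "inj (shift s)"
  by (metis injI shift_shift)

lemma triangle_shift: "triangle eps (shift s t) = (\<lambda>x. eps *\<^sub>R s + x) ` triangle eps t"
proof -
  obtain i j k where t: "t = (i,j,k)" by (cases t) auto
  have E: "{eps *\<^sub>R (i + s), eps *\<^sub>R (j + s), eps *\<^sub>R (k + s)} = (\<lambda>x. eps *\<^sub>R s + x) ` {eps *\<^sub>R i, eps *\<^sub>R j, eps *\<^sub>R k}"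
    by (auto simp: scaleR_add_right add.commute)
  have A: "triangle eps (shift s t) = convex hull {eps *\<^sub>R (i + s), eps *\<^sub>R (j + s), eps *\<^sub>R (k + s)}"
    using t by (simp add: triangle_def)
  have B: "triangle eps t = convex hull {eps *\<^sub>R i, eps *\<^sub>R j, eps *\<^sub>R k}" using t by (simp add: triangle_def)
  show ?thesis unfolding A B E by (rule convex_hull_translation)
qed

lemma interior_triangle_shift: "interior (triangle eps (shift s t)) = (\<lambda>x. eps *\<^sub>R s + x) ` interior (triangle eps t)"
  unfolding triangle_shift using interior_translation[of "eps *\<^sub>R s" "triangle eps t"] by simp

lemma chiT_shift: "chiT eps (\<lambda>z. u (z + eps *\<^sub>R s)) t = chiT eps u (shift s t)"
  by (cases t) (simp add: chiT_def scaleR_add_right)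

lemma FT_shift: "FT eps (\<lambda>z. u (z + eps *\<^sub>R s)) t = FT eps u (shift s t)"
  by (cases t) (simp add: FT_def scaleR_add_right)

lemma chi_shift:
  assumes eps: "eps > 0" and s: "s \<in> Lat1"
  shows "chi eps (\<lambda>z. u (z + eps *\<^sub>R s)) x = chi eps u (x + eps *\<^sub>R s)"
proof (cases "\<exists>t\<in>tri. x \<in> interior (triangle eps t)")
  case True
  then obtain t where t: "t \<in> tri" "x \<in> interior (triangle eps t)" by blast
  have "x + eps *\<^sub>R s \<in> interior (triangle eps (shift s t))"
    unfolding interior_triangle_shift using t(2) by (auto simp: add.commute)
  then have "chi eps u (x + eps *\<^sub>R s) = chiT eps u (shift s t)"
    using chi_eq[OF eps tri_shift[OF s t(1)]] by blast
  moreover have "chi eps (\<lambda>z. u (z + eps *\<^sub>R s)) x = chiT eps (\<lambda>z. u (z + eps *\<^sub>R s)) t"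
    using chi_eq[OF eps t] by blast
  ultimately show ?thesis by (simp add: chiT_shift)
next
  case False
  have "\<not> (\<exists>t\<in>tri. x + eps *\<^sub>R s \<in> interior (triangle eps t))"
  proof
    assume "\<exists>t\<in>tri. x + eps *\<^sub>R s \<in> interior (triangle eps t)"
    then obtain t where t: "t \<in> tri" "x + eps *\<^sub>R s \<in> interior (triangle eps t)" by blast
    have "shift (- s) t \<in> tri" using tri_shift[OF Lat1_uminus[OF s] t(1)] .
    moreover have "x \<in> interior (triangle eps (shift (- s) t))"
      unfolding interior_triangle_shift using t(2)
      by (auto simp: image_iff intro!: bexI[of _ "x + eps *\<^sub>R s"])
    ultimately show False using False by blast
  qed
  then show ?thesis using chi_out False by metis
qed

lemma triangle_scale: "triangle (c * eps) t = (\<lambda>x. c *\<^sub>R x) ` triangle eps t"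
proof -
  obtain i j k where t: "t = (i,j,k)" by (cases t) auto
  have E: "{(c * eps) *\<^sub>R i, (c * eps) *\<^sub>R j, (c * eps) *\<^sub>R k} = (\<lambda>x. c *\<^sub>R x) ` {eps *\<^sub>R i, eps *\<^sub>R j, eps *\<^sub>R k}"
    by auto
  have A: "triangle (c * eps) t = convex hull {(c * eps) *\<^sub>R i, (c * eps) *\<^sub>R j, (c * eps) *\<^sub>R k}"
    using t by (simp add: triangle_def)
  have B: "triangle eps t = convex hull {eps *\<^sub>R i, eps *\<^sub>R j, eps *\<^sub>R k}" using t by (simp add: triangle_def)
  show ?thesis unfolding A B E by (rule convex_hull_scaling)
qed

lemma scale_mem_iff: assumes "(c::real) \<noteq> 0" shows "(x::pt) \<in> (\<lambda>x. c *\<^sub>R x) ` S \<longleftrightarrow> (1/c) *\<^sub>R x \<in> S"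
proof
  assume "x \<in> (\<lambda>x. c *\<^sub>R x) ` S"
  then obtain y where "y \<in> S" "x = c *\<^sub>R y" by blast
  moreover have "(1/c) *\<^sub>R (c *\<^sub>R y) = y" using assms by simp
  ultimately show "(1/c) *\<^sub>R x \<in> S" by simp
next
  assume "(1/c) *\<^sub>R x \<in> S"
  moreover have "c *\<^sub>R ((1/c) *\<^sub>R x) = x" using assms by simp
  ultimately show "x \<in> (\<lambda>x. c *\<^sub>R x) ` S" by (metis image_eqI)
qed

lemma interior_triangle_scale:
  assumes "c \<noteq> 0"
  shows "interior (triangle (c * eps) t) = (\<lambda>x. c *\<^sub>R x) ` interior (triangle eps t)"
  unfolding triangle_scale
  by (rule interior_injective_linear_image) (use assms in \<open>auto simp: linear_scaleR inj_on_def\<close>)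

lemma chiT_scale: "c \<noteq> 0 \<Longrightarrow> chiT (c * eps) (\<lambda>y. u ((1/c) *\<^sub>R y)) t = chiT eps u t"
  by (cases t) (simp add: chiT_def)

lemma FT_scale: "c \<noteq> 0 \<Longrightarrow> FT (c * eps) (\<lambda>y. u ((1/c) *\<^sub>R y)) t = c * FT eps u t"
  by (cases t) (simp add: FT_def)

lemma chi_scale:
  assumes "c \<noteq> 0"
  shows "chi (c * eps) (\<lambda>y. u ((1/c) *\<^sub>R y)) x = chi eps u ((1/c) *\<^sub>R x)"
proof -
  have P: "x \<in> interior (triangle (c * eps) t) \<longleftrightarrow> (1/c) *\<^sub>R x \<in> interior (triangle eps t)" for t
    unfolding interior_triangle_scale[OF assms] scale_mem_iff[OF assms] ..
  show ?thesis unfolding chi_def P chiT_scale[OF assms] ..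
qed

lemma perp_inner[simp]: "\<nu> \<bullet> perp \<nu> = 0" "perp \<nu> \<bullet> \<nu> = 0" "perp \<nu> \<bullet> perp \<nu> = \<nu> \<bullet> \<nu>"
  by (cases \<nu>; simp add: perp_def)+

lemma norm_perp[simp]: "norm (perp \<nu>) = norm \<nu>"
  by (simp add: norm_eq_sqrt_inner)

lemma norm_sq_decomp:
  assumes "norm \<nu> = 1"
  shows "(norm x)^2 = (x \<bullet> \<nu>)^2 + (x \<bullet> perp \<nu>)^2"
proof -
  obtain a b where n: "\<nu> = (a,b)" by (cases \<nu>)
  obtain p q where x: "x = (p,q)" by (cases x)
  have "sqrt (a^2 + b^2) = 1" using assms n by (simp add: norm_Pair)
  then have ab: "a^2 + b^2 = 1" by (metis real_sqrt_eq_1_iff)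
  have nx: "(norm x)^2 = p^2 + q^2" using x by (simp add: norm_Pair)
  have i1: "x \<bullet> \<nu> = p*a + q*b" using n x by (simp add: inner_prod_def)
  have i2: "x \<bullet> perp \<nu> = q*a - p*b" using n x by (simp add: inner_prod_def perp_def)
  have "(p*a + q*b)^2 + (q*a - p*b)^2 = (p^2+q^2)*(a^2+b^2)" by (simp add: power2_eq_square algebra_simps)
  then show ?thesis unfolding nx i1 i2 ab by simp
qed

lemma norm_le_rect:
  assumes "norm \<nu> = 1"
  shows "norm x \<le> \<bar>x \<bullet> \<nu>\<bar> + \<bar>x \<bullet> perp \<nu>\<bar>"
proof -
  have "(norm x)^2 \<le> (\<bar>x \<bullet> \<nu>\<bar> + \<bar>x \<bullet> perp \<nu>\<bar>)^2"
    unfolding norm_sq_decomp[OF assms] by (simp add: power2_eq_square algebra_simps)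
  then show ?thesis by (rule power2_le_imp_le) simp
qed

lemma rect_bounded: assumes "norm \<nu> = 1" shows "rect \<nu> l h \<subseteq> cball 0 (l/2 + h/2)"
proof
  fix x assume "x \<in> rect \<nu> l h"
  then have "\<bar>x \<bullet> perp \<nu>\<bar> < l/2" "\<bar>x \<bullet> \<nu>\<bar> < h/2" by (auto simp: rect_def)
  then show "x \<in> cball 0 (l/2 + h/2)" using norm_le_rect[OF assms, of x] by simp
qed

lemma rect_open: "open (rect \<nu> l h)"
proof -
  have "rect \<nu> l h = {x. \<bar>x \<bullet> perp \<nu>\<bar> < l/2} \<inter> {x. \<bar>x \<bullet> \<nu>\<bar> < h/2}" by (auto simp: rect_def)
  moreover have "open {x. \<bar>x \<bullet> perp \<nu>\<bar> < l/2}"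
    by (rule open_Collect_less) (intro continuous_on_rabs continuous_on_inner continuous_on_id continuous_on_const)+
  moreover have "open {x. \<bar>x \<bullet> \<nu>\<bar> < h/2}"
    by (rule open_Collect_less) (intro continuous_on_rabs continuous_on_inner continuous_on_id continuous_on_const)+
  ultimately show ?thesis by auto
qed

lemma rect_scale: assumes "c > 0" shows "x \<in> rect \<nu> (c*l) (c*h) \<longleftrightarrow> (1/c) *\<^sub>R x \<in> rect \<nu> l h"
proof -
  have "\<bar>x \<bullet> w\<bar> < c * r / 2 \<longleftrightarrow> \<bar>((1/c) *\<^sub>R x) \<bullet> w\<bar> < r / 2" for w r
  proof -
    have "\<bar>((1/c) *\<^sub>R x) \<bullet> w\<bar> = \<bar>x \<bullet> w\<bar> / c" using assms by (simp add: abs_mult)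
    then show ?thesis using assms by (simp add: field_simps)
  qed
  then show ?thesis by (simp add: rect_def)
qed

lemma fst_snd_le: "\<bar>fst p\<bar> \<le> norm p" "\<bar>snd p\<bar> \<le> norm p"
proof -
  obtain a b where p: "p = (a,b)" by (cases p)
  show "\<bar>fst p\<bar> \<le> norm p" using norm_fst_le[of a b] p by simp
  show "\<bar>snd p\<bar> \<le> norm p" using norm_snd_le[of b a] p by simp
qed

lemma div_s3_le: "\<bar>y / sqrt 3\<bar> \<le> \<bar>y::real\<bar>"
proof -
  have s1: "1 \<le> sqrt (3::real)" by simp
  have "\<bar>y / sqrt 3\<bar> = \<bar>y\<bar> / sqrt 3" by (simp add: abs_divide)
  also have "\<dots> \<le> \<bar>y\<bar>"
  proof (subst pos_divide_le_eq)
    show "0 < sqrt (3::real)" by simp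
    have "\<bar>y\<bar> * 1 \<le> \<bar>y\<bar> * sqrt 3" using s1 by (intro mult_left_mono) simp_all
    then show "\<bar>y\<bar> \<le> \<bar>y\<bar> * sqrt 3" by simp
  qed
  finally show ?thesis .
qed

lemma ca_bound: "\<bar>ca p\<bar> \<le> 2 * norm p"
  using fst_snd_le[of p] div_s3_le[of "snd p"] unfolding ca_def by linarith

lemma cb_bound: "\<bar>cb p\<bar> \<le> 2 * norm p"
proof -
  have "cb p = 2 * (snd p / sqrt 3)" by (simp add: cb_def)
  then have "\<bar>cb p\<bar> = 2 * \<bar>snd p / sqrt 3\<bar>" by (simp add: abs_mult)
  then show ?thesis using fst_snd_le[of p] div_s3_le[of "snd p"] by linarith
qed

lemma int_bound: fixes a :: int assumes "\<bar>real_of_int a\<bar> \<le> r" shows "a \<in> {-\<lceil>r\<rceil>..\<lceil>r\<rceil>}"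
proof -
  have "real_of_int a \<le> real_of_int \<lceil>r\<rceil>" using assms le_of_int_ceiling[of r] by linarith
  moreover have "- real_of_int a \<le> real_of_int \<lceil>r\<rceil>" using assms le_of_int_ceiling[of r] by linarith
  ultimately have "a \<le> \<lceil>r\<rceil>" "- a \<le> \<lceil>r\<rceil>" by (simp_all only: of_int_le_iff flip: of_int_minus)
  then show ?thesis by simp
qed

lemma Lat_ball_finite: "finite {p \<in> Lat. norm p \<le> R}"
proof -
  define N where "N = \<lceil>2 * R\<rceil>"
  have "{p \<in> Lat. norm p \<le> R} \<subseteq> (\<lambda>(a,b). of_int a *\<^sub>R e1 + of_int b *\<^sub>R e2) ` ({-N..N} \<times> {-N..N})"
  proof
    fix p assume p: "p \<in> {p \<in> Lat. norm p \<le> R}"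
    then obtain a b :: int where ab: "ca p = a" "cb p = b" using Lat_coords by blast
    have "\<bar>real_of_int a\<bar> \<le> 2 * R" using ca_bound[of p] p ab by simp
    then have a: "a \<in> {-N..N}" unfolding N_def by (rule int_bound)
    have "\<bar>real_of_int b\<bar> \<le> 2 * R" using cb_bound[of p] p ab by simp
    then have b: "b \<in> {-N..N}" unfolding N_def by (rule int_bound)
    have "p = of_int a *\<^sub>R e1 + of_int b *\<^sub>R e2" using pt_repr[of p] ab by simp
    then show "p \<in> (\<lambda>(a,b). of_int a *\<^sub>R e1 + of_int b *\<^sub>R e2) ` ({-N..N} \<times> {-N..N})"
      using a b by (intro image_eqI[of _ _ "(a,b)"]) auto
  qed
  then show ?thesis by (rule finite_subset) auto
qed

lemma tri_vertices_in: "(i,j,k) \<in> tri \<Longrightarrow> i \<in> Lat \<and> j \<in> Lat \<and> k \<in> Lat"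
  using tri_Lat Lat1_sub Lat2_sub Lat3_sub by blast

lemma triangle_vertices: "eps *\<^sub>R i \<in> triangle eps (i,j,k) \<and> eps *\<^sub>R j \<in> triangle eps (i,j,k) \<and> eps *\<^sub>R k \<in> triangle eps (i,j,k)"
  by (simp add: triangle_def hull_inc)

lemma triA_finite:
  assumes "eps > 0" "A \<subseteq> cball 0 R"
  shows "finite (triA eps A)"
proof -
  let ?F = "{p \<in> Lat. norm p \<le> R / eps}"
  have "triA eps A \<subseteq> ?F \<times> ?F \<times> ?F"
  proof
    fix t assume t: "t \<in> triA eps A"
    obtain i j k where tt: "t = (i,j,k)" by (cases t) auto
    have tri: "(i,j,k) \<in> tri" and sub: "triangle eps (i,j,k) \<subseteq> A" using t tt by (auto simp: triA_def)
    have "norm p \<le> R / eps" if "eps *\<^sub>R p \<in> A" for p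
    proof -
      have "eps * norm p \<le> R" using that assms(2) assms(1) by auto
      then show ?thesis using assms(1) by (simp add: field_simps)
    qed
    have "eps *\<^sub>R i \<in> A" "eps *\<^sub>R j \<in> A" "eps *\<^sub>R k \<in> A" using triangle_vertices[of eps i j k] sub by blast+
    then have "i \<in> ?F" "j \<in> ?F" "k \<in> ?F" using tri_vertices_in[OF tri] \<open>\<And>p. eps *\<^sub>R p \<in> A \<Longrightarrow> norm p \<le> R / eps\<close> by blast+
    then show "t \<in> ?F \<times> ?F \<times> ?F" using tt by simp
  qed
  moreover have "finite (?F \<times> ?F \<times> ?F)" using Lat_ball_finite by auto
  ultimately show ?thesis by (rule finite_subset)
qed

lemma triA_finite_rect: "eps > 0 \<Longrightarrow> norm \<nu> = 1 \<Longrightarrow> finite (triA eps (rect \<nu> l h))"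
  using triA_finite rect_bounded by blast

lemma FT_nonneg: "eps \<ge> 0 \<Longrightarrow> FT eps u t \<ge> 0"
  by (cases t) (simp add: FT_def)

lemma FA_nonneg: "eps \<ge> 0 \<Longrightarrow> FA eps u A \<ge> 0"
  unfolding FA_def by (intro sum_nonneg FT_nonneg)

lemma FA_scale:
  assumes "c > 0"
  shows "FA (c * eps) (\<lambda>y. u ((1/c) *\<^sub>R y)) (rect \<nu> (c*l) (c*h)) = c * FA eps u (rect \<nu> l h)"
proof -
  have "triA (c * eps) (rect \<nu> (c*l) (c*h)) = triA eps (rect \<nu> l h)"
  proof -
    have "triangle (c * eps) t \<subseteq> rect \<nu> (c*l) (c*h) \<longleftrightarrow> triangle eps t \<subseteq> rect \<nu> l h" for t
    proof -
      have "triangle (c * eps) t \<subseteq> rect \<nu> (c*l) (c*h) \<longleftrightarrow> (\<forall>y\<in>triangle eps t. c *\<^sub>R y \<in> rect \<nu> (c*l) (c*h))"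
        unfolding triangle_scale by blast
      also have "\<dots> \<longleftrightarrow> (\<forall>y\<in>triangle eps t. y \<in> rect \<nu> l h)"
        using assms by (simp add: rect_scale)
      finally show ?thesis by blast
    qed
    then show ?thesis by (simp add: triA_def)
  qed
  then show ?thesis using assms by (simp add: FA_def FT_scale sum_distrib_left)
qed

lemma triA_shift:
  assumes s: "s \<in> Lat1" and sub: "(\<lambda>x. eps *\<^sub>R s + x) ` A \<subseteq> A'"
  shows "shift s ` triA eps A \<subseteq> triA eps A'"
proof
  fix t' assume "t' \<in> shift s ` triA eps A"
  then obtain t where t: "t \<in> triA eps A" "t' = shift s t" by blast
  have "t' \<in> tri" using t tri_shift[OF s] by (auto simp: triA_def)
  moreover have "triangle eps t' \<subseteq> A'"
  proof -
    have "triangle eps t \<subseteq> A" using t by (simp add: triA_def)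
    then have "(\<lambda>x. eps *\<^sub>R s + x) ` triangle eps t \<subseteq> A'" using sub by blast
    then show ?thesis using t(2) triangle_shift by simp
  qed
  ultimately show "t' \<in> triA eps A'" by (simp add: triA_def)
qed

lemma FA_shift_le:
  assumes eps: "eps > 0" and s: "s \<in> Lat1" and sub: "(\<lambda>x. eps *\<^sub>R s + x) ` A \<subseteq> A'"
    and fin: "finite (triA eps A')"
  shows "FA eps (\<lambda>z. u (z + eps *\<^sub>R s)) A \<le> FA eps u A'"
proof -
  have "FA eps (\<lambda>z. u (z + eps *\<^sub>R s)) A = (\<Sum>t\<in>triA eps A. FT eps u (shift s t))"
    unfolding FA_def FT_shift ..
  also have "\<dots> = (\<Sum>t\<in>shift s ` triA eps A. FT eps u t)"
    by (rule sum.reindex[symmetric, unfolded comp_def]) (meson inj_on_subset shift_inj subset_UNIV)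
  also have "\<dots> \<le> (\<Sum>t\<in>triA eps A'. FT eps u t)"
    by (rule sum_mono2[OF fin triA_shift[OF s sub]]) (use eps FT_nonneg in auto)
  finally show ?thesis unfolding FA_def .
qed

lemma int_scale:
  fixes f :: "pt \<Rightarrow> ennreal"
  assumes f[measurable]: "f \<in> borel_measurable borel" and c: "c > 0"
  shows "(\<integral>\<^sup>+x. f ((1/c) *\<^sub>R x) \<partial>lborel) = ennreal (c^2) * (\<integral>\<^sup>+x. f x \<partial>lborel)"
proof -
  have cne: "c \<noteq> 0" using c by simp
  have "(\<integral>\<^sup>+x. f ((1/c) *\<^sub>R x) \<partial>lborel)
      = (\<integral>\<^sup>+x. f ((1/c) *\<^sub>R x) \<partial>density (distr lborel borel (\<lambda>x. 0 + c *\<^sub>R x)) (\<lambda>_. \<bar>c\<bar>^DIM(pt)))"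
    using lborel_affine[OF cne, of "0::pt"] by simp
  also have "\<dots> = (\<integral>\<^sup>+x. ennreal (\<bar>c\<bar>^DIM(pt)) * f ((1/c) *\<^sub>R x) \<partial>distr lborel borel (\<lambda>x. 0 + c *\<^sub>R x))"
    by (subst nn_integral_density) auto
  also have "\<dots> = (\<integral>\<^sup>+x. ennreal (\<bar>c\<bar>^DIM(pt)) * f ((1/c) *\<^sub>R (0 + c *\<^sub>R x)) \<partial>lborel)"
    by (subst nn_integral_distr) auto
  also have "\<dots> = (\<integral>\<^sup>+x. ennreal (c^2) * f x \<partial>lborel)"
    using c by (simp add: power2_eq_square)
  also have "\<dots> = ennreal (c^2) * (\<integral>\<^sup>+x. f x \<partial>lborel)"
    by (rule nn_integral_cmult) simp
  finally show ?thesis .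
qed

lemma int_shift:
  fixes f :: "pt \<Rightarrow> ennreal"
  assumes f[measurable]: "f \<in> borel_measurable borel"
  shows "(\<integral>\<^sup>+x. f (x + c) \<partial>lborel) = (\<integral>\<^sup>+x. f x \<partial>lborel)"
proof -
  have "(\<integral>\<^sup>+x. f x \<partial>lborel) = (\<integral>\<^sup>+x. f x \<partial>distr lborel borel ((+) c))"
    by (simp add: lborel_distr_plus)
  also have "\<dots> = (\<integral>\<^sup>+x. f (c + x) \<partial>lborel)"
    by (subst nn_integral_distr) auto
  finally show ?thesis by (simp add: add.commute)
qed

lemma err_measurable:
  assumes "eps > 0" "A \<in> sets borel"
  shows "(\<lambda>x. ennreal (indicator A x * \<bar>chi eps u x - chi_nu \<nu> x\<bar>)) \<in> borel_measurable borel"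
proof -
  have [measurable]: "chi eps u \<in> borel_measurable borel" using chi_measurable[OF assms(1)] by simp
  have [measurable]: "chi_nu \<nu> \<in> borel_measurable borel" using chi_nu_measurable by simp
  have [measurable]: "A \<in> sets borel" by (rule assms(2))
  show ?thesis by measurable
qed

lemma chi_nu_scale: "c > 0 \<Longrightarrow> chi_nu \<nu> ((1/c) *\<^sub>R x) = chi_nu \<nu> x"
  by (simp add: chi_nu_def zero_le_divide_iff)

lemma err_scale:
  assumes c: "c > 0" and eps: "eps > 0" and nu: "norm \<nu> = 1"
  shows "(\<integral>\<^sup>+x. ennreal (indicator (rect \<nu> (c*l) (c*h)) x * \<bar>chi (c*eps) (\<lambda>y. u ((1/c) *\<^sub>R y)) x - chi_nu \<nu> x\<bar>) \<partial>lborel)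
     = ennreal (c^2) * (\<integral>\<^sup>+x. ennreal (indicator (rect \<nu> l h) x * \<bar>chi eps u x - chi_nu \<nu> x\<bar>) \<partial>lborel)"
proof -
  have cne: "c \<noteq> 0" using c by simp
  have "(\<lambda>x. ennreal (indicator (rect \<nu> (c*l) (c*h)) x * \<bar>chi (c*eps) (\<lambda>y. u ((1/c) *\<^sub>R y)) x - chi_nu \<nu> x\<bar>))
      = (\<lambda>x. (\<lambda>y. ennreal (indicator (rect \<nu> l h) y * \<bar>chi eps u y - chi_nu \<nu> y\<bar>)) ((1/c) *\<^sub>R x))"
    by (rule ext) (simp add: chi_scale[OF cne] chi_nu_scale[OF c] indicator_def rect_scale[OF c])
  then show ?thesis
    using int_scale[OF err_measurable[OF eps borel_open[OF rect_open]] c] by simp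
qed

lemma chi_nu_diff:
  "\<bar>chi_nu \<nu> (x + t) - chi_nu \<nu> x\<bar> \<le> 2 * indicator {x. \<bar>x \<bullet> \<nu>\<bar> \<le> \<bar>t \<bullet> \<nu>\<bar>} x"
  by (auto simp: chi_nu_def indicator_def inner_add_left)

lemma err_shift:
  assumes eps: "eps > 0" and s: "s \<in> Lat1" and sub: "(\<lambda>x. eps *\<^sub>R s + x) ` R \<subseteq> B"
    and R: "R \<in> sets borel" and B: "B \<in> sets borel"
  shows "(\<integral>\<^sup>+x. ennreal (indicator R x * \<bar>chi eps (\<lambda>z. u (z + eps *\<^sub>R s)) x - chi_nu \<nu> x\<bar>) \<partial>lborel)
     \<le> (\<integral>\<^sup>+x. ennreal (indicator B x * \<bar>chi eps u x - chi_nu \<nu> x\<bar>) \<partial>lborel)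
       + 2 * emeasure lborel (R \<inter> {x. \<bar>x \<bullet> \<nu>\<bar> \<le> \<bar>(eps *\<^sub>R s) \<bullet> \<nu>\<bar>})"
proof -
  let ?t = "eps *\<^sub>R s"
  let ?S = "R \<inter> {x. \<bar>x \<bullet> \<nu>\<bar> \<le> \<bar>?t \<bullet> \<nu>\<bar>}"
  let ?G = "\<lambda>x. ennreal (indicator B x * \<bar>chi eps u x - chi_nu \<nu> x\<bar>)"
  have Sm: "?S \<in> sets borel"
  proof -
    have "closed {x. \<bar>x \<bullet> \<nu>\<bar> \<le> \<bar>?t \<bullet> \<nu>\<bar>}"
      by (rule closed_Collect_le) (intro continuous_on_rabs continuous_on_inner continuous_on_id continuous_on_const)+
    then have "{x. \<bar>x \<bullet> \<nu>\<bar> \<le> \<bar>?t \<bullet> \<nu>\<bar>} \<in> sets borel" by (rule borel_closed)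
    then show ?thesis using R by (rule sets.Int[rotated])
  qed
  have Gm: "?G \<in> borel_measurable borel" by (rule err_measurable[OF eps B])
  have pw: "ennreal (indicator R x * \<bar>chi eps (\<lambda>z. u (z + ?t)) x - chi_nu \<nu> x\<bar>)
      \<le> ?G (x + ?t) + 2 * indicator ?S x" for x
  proof (cases "x \<in> R")
    case True
    then have xB: "x + ?t \<in> B" using sub by (auto simp: add.commute)
    have "\<bar>chi eps u (x + ?t) - chi_nu \<nu> x\<bar> \<le> \<bar>chi eps u (x + ?t) - chi_nu \<nu> (x + ?t)\<bar> + \<bar>chi_nu \<nu> (x + ?t) - chi_nu \<nu> x\<bar>"
      by linarith
    also have "\<dots> \<le> \<bar>chi eps u (x + ?t) - chi_nu \<nu> (x + ?t)\<bar> + 2 * indicator ?S x"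
      using chi_nu_diff[of \<nu> x ?t] True by (simp add: indicator_def split: if_splits)
    finally have "\<bar>chi eps u (x + ?t) - chi_nu \<nu> x\<bar> \<le> \<bar>chi eps u (x + ?t) - chi_nu \<nu> (x + ?t)\<bar> + 2 * indicator ?S x" .
    then have "ennreal (\<bar>chi eps u (x + ?t) - chi_nu \<nu> x\<bar>) \<le> ennreal (\<bar>chi eps u (x + ?t) - chi_nu \<nu> (x + ?t)\<bar>) + ennreal (2 * indicator ?S x)"
      by (metis ennreal_leI ennreal_plus abs_ge_zero mult_nonneg_nonneg zero_le_numeral indicator_pos_le)
    then show ?thesis using True xB by (simp add: chi_shift[OF eps s] indicator_def of_bool_def split: if_splits)
  next
    case False
    then show ?thesis by simp
  qed
  have "(\<integral>\<^sup>+x. ennreal (indicator R x * \<bar>chi eps (\<lambda>z. u (z + ?t)) x - chi_nu \<nu> x\<bar>) \<partial>lborel)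
      \<le> (\<integral>\<^sup>+x. ?G (x + ?t) + 2 * indicator ?S x \<partial>lborel)"
    by (rule nn_integral_mono) (rule pw)
  also have "\<dots> = (\<integral>\<^sup>+x. ?G (x + ?t) \<partial>lborel) + (\<integral>\<^sup>+x. 2 * indicator ?S x \<partial>lborel)"
    by (rule nn_integral_add) (use Gm Sm in auto)
  also have "\<dots> = (\<integral>\<^sup>+x. ?G x \<partial>lborel) + 2 * emeasure lborel ?S"
    using int_shift[OF Gm, of ?t] nn_integral_cmult_indicator[of ?S lborel 2] Sm by simp
  finally show ?thesis .
qed

lemma strip_limit:
  fixes \<nu> :: pt and r :: "nat \<Rightarrow> real"
  assumes nu: "\<nu> \<noteq> 0" and Rb: "bounded R" and Rm: "R \<in> sets borel" and r: "r \<longlonglongrightarrow> 0"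
  shows "(\<lambda>m. emeasure lborel (R \<inter> {x. \<bar>x \<bullet> \<nu>\<bar> \<le> \<bar>r m\<bar>})) \<longlonglongrightarrow> 0"
proof -
  have strip_m: "{x. \<bar>x \<bullet> \<nu>\<bar> \<le> c} \<in> sets borel" for c
  proof -
    have "closed {x. \<bar>x \<bullet> \<nu>\<bar> \<le> c}"
      by (rule closed_Collect_le) (intro continuous_on_rabs continuous_on_inner continuous_on_id continuous_on_const)+
    then show ?thesis by (rule borel_closed)
  qed
  define A where "A n = R \<inter> {x. \<bar>x \<bullet> \<nu>\<bar> \<le> 1 / Suc n}" for n
  have Am: "range A \<subseteq> sets lborel" using strip_m Rm by (auto simp: A_def)
  have Ad: "decseq A"
  proof (rule decseq_SucI)
    fix n
    have "1 / real (Suc (Suc n)) \<le> 1 / real (Suc n)" by (simp add: frac_le)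
    then show "A (Suc n) \<subseteq> A n" unfolding A_def by auto
  qed
  have Af: "emeasure lborel (A n) \<noteq> \<infinity>" for n
  proof -
    have "bounded (A n)" using Rb by (auto simp: A_def intro: bounded_subset)
    then show ?thesis using emeasure_bounded_finite by (metis less_irrefl)
  qed
  have H: "{x. \<nu> \<bullet> x = 0} \<in> null_sets lborel"
  proof -
    have "negligible {x. \<nu> \<bullet> x = 0}" using negligible_hyperplane[of \<nu> 0] nu by simp
    then have "{x. \<nu> \<bullet> x = 0} \<in> null_sets lebesgue" by (simp add: negligible_iff_null_sets)
    moreover have "{x. \<nu> \<bullet> x = 0} \<in> sets lborel"
    proof -
      have "closed {x. \<nu> \<bullet> x = 0}" by (rule closed_hyperplane)
      then show ?thesis by (simp add: borel_closed)
    qed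
    ultimately show ?thesis using null_sets_completion_iff by blast
  qed
  have "(\<Inter>n. A n) \<subseteq> {x. \<nu> \<bullet> x = 0}"
  proof
    fix x assume x: "x \<in> (\<Inter>n. A n)"
    have "\<bar>x \<bullet> \<nu>\<bar> \<le> 1 / Suc n" for n using x by (auto simp: A_def)
    have "\<not> \<bar>x \<bullet> \<nu>\<bar> > 0"
    proof
      assume "\<bar>x \<bullet> \<nu>\<bar> > 0"
      then obtain n where "inverse (real (Suc n)) < \<bar>x \<bullet> \<nu>\<bar>" using reals_Archimedean by blast
      moreover have "\<bar>x \<bullet> \<nu>\<bar> \<le> inverse (real (Suc n))" using \<open>\<And>n. \<bar>x \<bullet> \<nu>\<bar> \<le> 1 / Suc n\<close>[of n] by (simp add: inverse_eq_divide)
      ultimately show False by simp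
    qed
    then have "\<bar>x \<bullet> \<nu>\<bar> \<le> 0" by simp
    then show "x \<in> {x. \<nu> \<bullet> x = 0}" by (simp add: inner_commute)
  qed
  moreover have "(\<Inter>n. A n) \<in> sets lborel" using Am by auto
  ultimately have "(\<Inter>n. A n) \<in> null_sets lborel" using H null_sets_subset by blast
  then have z: "emeasure lborel (\<Inter>n. A n) = 0" by (rule null_setsD1)
  have lim: "(\<lambda>n. emeasure lborel (A n)) \<longlonglongrightarrow> 0"
    using Lim_emeasure_decseq[OF Am Ad Af] unfolding z .
  show ?thesis
    unfolding order_tendsto_iff
  proof (intro conjI allI impI)
    fix a :: ennreal assume "a < 0" then show "\<forall>\<^sub>F m in sequentially. a < emeasure lborel (R \<inter> {x. \<bar>x \<bullet> \<nu>\<bar> \<le> \<bar>r m\<bar>})" by simp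
  next
    fix a :: ennreal assume a: "0 < a"
    have "\<forall>\<^sub>F n in sequentially. emeasure lborel (A n) < a" by (rule order_tendstoD(2)[OF lim a])
    then obtain N0 where "\<forall>n\<ge>N0. emeasure lborel (A n) < a" by (auto simp: eventually_sequentially)
    then have N: "emeasure lborel (A N0) < a" by simp
    define N where "N = N0"
    have N: "emeasure lborel (A N) < a" using N by (simp add: N_def)
    have "1 / real (Suc N) > 0" by simp
    then obtain no where no: "\<forall>n\<ge>no. norm (r n - 0) < 1 / Suc N" using LIMSEQ_iff[THEN iffD1, OF r] by blast
    have "\<forall>\<^sub>F m in sequentially. \<bar>r m\<bar> < 1 / Suc N"
      unfolding eventually_sequentially using no by auto
    then show "\<forall>\<^sub>F m in sequentially. emeasure lborel (R \<inter> {x. \<bar>x \<bullet> \<nu>\<bar> \<le> \<bar>r m\<bar>}) < a"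
    proof (rule eventually_mono)
      fix m assume m: "\<bar>r m\<bar> < 1 / Suc N"
      have "R \<inter> {x. \<bar>x \<bullet> \<nu>\<bar> \<le> \<bar>r m\<bar>} \<subseteq> A N" using m by (auto simp: A_def)
      then have "emeasure lborel (R \<inter> {x. \<bar>x \<bullet> \<nu>\<bar> \<le> \<bar>r m\<bar>}) \<le> emeasure lborel (A N)"
        using Am by (intro emeasure_mono) auto
      then show "emeasure lborel (R \<inter> {x. \<bar>x \<bullet> \<nu>\<bar> \<le> \<bar>r m\<bar>}) < a" using N by simp
    qed
  qed
qed

lemma norm_pair_le: "norm ((a,b)::pt) \<le> \<bar>a\<bar> + \<bar>b\<bar>"
proof -
  have "norm ((a,b)::pt) = norm ((a,0) + (0,b) :: pt)" by simp
  also have "\<dots> \<le> norm ((a,0)::pt) + norm ((0,b)::pt)" by (rule norm_triangle_ineq)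
  also have "\<dots> = \<bar>a\<bar> + \<bar>b\<bar>" by (simp add: norm_Pair)
  finally show ?thesis .
qed

lemma Lat1_cover: "\<exists>s\<in>Lat1. norm (s - y) \<le> 5"
proof -
  obtain y1 y2 where y: "y = (y1, y2)" by (cases y)
  define s1 where "s1 = 2 * y1 / 3"
  define s2 where "s2 = (y2 - s1 * sqrt 3 / 2) / sqrt 3"
  define f1 :: pt where "f1 = e1 + e2"
  define f2 :: pt where "f2 = e2 + e3"
  have f1: "f1 = (3/2, sqrt 3 / 2)" by (simp add: f1_def e1_def e2_def)
  have f2: "f2 = (0, sqrt 3)" by (simp add: f2_def e2_def e3_def)
  have yrep: "y = s1 *\<^sub>R f1 + s2 *\<^sub>R f2" using y by (simp add: f1 f2 s1_def s2_def field_simps)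
  define z1 where "z1 = \<lfloor>s1\<rfloor>"
  define z2 where "z2 = \<lfloor>s2\<rfloor>"
  define s where "s = of_int z1 *\<^sub>R f1 + of_int z2 *\<^sub>R f2"
  have sL: "s \<in> Lat1" unfolding s_def f1_def f2_def Lat1_def by blast
  have d1: "\<bar>s1 - of_int z1\<bar> \<le> 1" "\<bar>s2 - of_int z2\<bar> \<le> 1" unfolding z1_def z2_def
    by (simp_all add: abs_le_iff) linarith+
  have nf1: "norm f1 \<le> 5/2"
  proof -
    have "norm f1 \<le> \<bar>3/2\<bar> + \<bar>sqrt 3 / 2\<bar>" unfolding f1 by (rule norm_pair_le)
    moreover have "sqrt 3 \<le> (2::real)" by (simp add: real_sqrt_le_iff')
    ultimately show ?thesis by simp
  qed
  have nf2: "norm f2 \<le> 2"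
  proof -
    have "norm f2 \<le> \<bar>0\<bar> + \<bar>sqrt 3\<bar>" unfolding f2 by (rule norm_pair_le)
    moreover have "sqrt 3 \<le> (2::real)" by (simp add: real_sqrt_le_iff')
    ultimately show ?thesis by simp
  qed
  have "s - y = (of_int z1 - s1) *\<^sub>R f1 + (of_int z2 - s2) *\<^sub>R f2"
    unfolding s_def yrep by (simp add: algebra_simps)
  then have "norm (s - y) \<le> \<bar>of_int z1 - s1\<bar> * norm f1 + \<bar>of_int z2 - s2\<bar> * norm f2"
    by (metis norm_scaleR norm_triangle_ineq)
  also have "\<dots> \<le> 1 * (5/2) + 1 * 2"
    using d1 nf1 nf2 by (intro add_mono mult_mono) (auto simp: abs_minus_commute)
  finally have "norm (s - y) \<le> 5" by simp
  then show ?thesis using sL by blast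
qed

definition errI :: "real \<Rightarrow> (pt \<Rightarrow> pt) \<Rightarrow> pt \<Rightarrow> pt set \<Rightarrow> ennreal" where
  "errI eps u \<nu> A = (\<integral>\<^sup>+ x. ennreal (indicator A x * \<bar>chi eps u x - chi_nu \<nu> x\<bar>) \<partial>lborel)"

definition Iset :: "pt \<Rightarrow> real \<Rightarrow> real \<Rightarrow> ereal set" where
  "Iset \<nu> l h = {liminf (\<lambda>n. ereal (FA (eps n) (u n) (rect \<nu> l h))) | eps u.
            (\<forall>n. eps n > 0) \<and> eps \<longlonglongrightarrow> 0 \<and> (\<forall>n. spin_field (eps n) (u n)) \<and>
            (\<lambda>n. errI (eps n) (u n) \<nu> (rect \<nu> l h)) \<longlonglongrightarrow> 0}"

lemma psi_Iset: "psi l h \<nu> = ereal (1 / l) * Inf (Iset \<nu> l h)"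
  unfolding psi_def Iset_def errI_def ..

lemma IsetI:
  assumes "\<And>n. eps n > 0" "eps \<longlonglongrightarrow> 0" "\<And>n. spin_field (eps n) (u n)"
    "(\<lambda>n. errI (eps n) (u n) \<nu> (rect \<nu> l h)) \<longlonglongrightarrow> 0"
  shows "liminf (\<lambda>n. ereal (FA (eps n) (u n) (rect \<nu> l h))) \<in> Iset \<nu> l h"
  unfolding Iset_def using assms by blast

lemma Iset_nonneg: assumes "s \<in> Iset \<nu> l h" shows "s \<ge> 0"
proof -
  obtain eps u where s_eq: "s = liminf (\<lambda>n. ereal (FA (eps n) (u n) (rect \<nu> l h)))"
    and e0: "\<And>n. eps n > 0" using assms unfolding Iset_def by blast
  have "\<forall>\<^sub>F n in sequentially. 0 \<le> ereal (FA (eps n) (u n) (rect \<nu> l h))"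
  proof (intro always_eventually allI)
    fix n show "0 \<le> ereal (FA (eps n) (u n) (rect \<nu> l h))" using FA_nonneg[of "eps n"] e0[of n] by simp
  qed
  then show ?thesis unfolding s_eq by (rule Liminf_bounded)
qed

lemma Inf_Iset_nonneg: "Inf (Iset \<nu> l h) \<ge> 0"
  by (rule Inf_greatest) (rule Iset_nonneg)

lemma scale_mem:
  assumes c: "c > 0" and nu: "norm \<nu> = 1" and s: "s \<in> Iset \<nu> l h"
  shows "ereal c * s \<in> Iset \<nu> (c*l) (c*h)"
proof -
  obtain eps u where s_eq: "s = liminf (\<lambda>n. ereal (FA (eps n) (u n) (rect \<nu> l h)))"
    and e0: "\<And>n. eps n > 0" and el: "eps \<longlonglongrightarrow> 0" and sf: "\<And>n. spin_field (eps n) (u n)"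
    and er: "(\<lambda>n. errI (eps n) (u n) \<nu> (rect \<nu> l h)) \<longlonglongrightarrow> 0"
    using s unfolding Iset_def by blast
  have cne: "c \<noteq> 0" using c by simp
  define eps' where "eps' n = c * eps n" for n
  define u' where "u' n = (\<lambda>y. u n ((1/c) *\<^sub>R y))" for n
  have "liminf (\<lambda>n. ereal (FA (eps' n) (u' n) (rect \<nu> (c*l) (c*h)))) \<in> Iset \<nu> (c*l) (c*h)"
  proof (rule IsetI)
    show "eps' n > 0" for n using c e0[of n] by (simp add: eps'_def)
    show "eps' \<longlonglongrightarrow> 0" unfolding eps'_def using tendsto_mult[OF tendsto_const[of c] el] by simp
    show "spin_field (eps' n) (u' n)" for n
    proof -
      have "(1/c) *\<^sub>R ((c * eps n) *\<^sub>R x) = eps n *\<^sub>R x" for x :: pt using cne by simp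
      then show ?thesis using sf[of n] cne by (simp add: spin_field_def eps'_def u'_def)
    qed
    have "errI (eps' n) (u' n) \<nu> (rect \<nu> (c*l) (c*h)) = ennreal (c^2) * errI (eps n) (u n) \<nu> (rect \<nu> l h)" for n
      unfolding errI_def eps'_def u'_def by (rule err_scale[OF c e0 nu])
    then show "(\<lambda>n. errI (eps' n) (u' n) \<nu> (rect \<nu> (c*l) (c*h))) \<longlonglongrightarrow> 0"
      using ennreal_tendsto_cmult[OF _ er, of "ennreal (c^2)"] by simp
  qed
  moreover have "liminf (\<lambda>n. ereal (FA (eps' n) (u' n) (rect \<nu> (c*l) (c*h)))) = ereal c * s"
  proof -
    have eq: "(\<lambda>n. ereal (FA (eps' n) (u' n) (rect \<nu> (c*l) (c*h)))) = (\<lambda>n. ereal c * ereal (FA (eps n) (u n) (rect \<nu> l h)))"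
      unfolding eps'_def u'_def by (simp add: FA_scale[OF c])
    show ?thesis unfolding eq s_eq by (rule Liminf_ereal_mult_left) (use c in auto)
  qed
  ultimately show ?thesis by simp
qed

lemma perp_self: "norm \<nu> = 1 \<Longrightarrow> perp \<nu> \<bullet> perp \<nu> = 1"
  by (simp add: power2_norm_eq_inner[symmetric])

definition ck :: "pt \<Rightarrow> nat \<Rightarrow> real \<Rightarrow> nat \<Rightarrow> pt" where
  "ck \<nu> n w k = ((real k + 1/2) * w - real n * w / 2) *\<^sub>R perp \<nu>"

definition Pc :: "pt \<Rightarrow> nat \<Rightarrow> real \<Rightarrow> real \<Rightarrow> nat \<Rightarrow> pt set" where
  "Pc \<nu> n w H k = {y. y - ck \<nu> n w k \<in> rect \<nu> w H}"

lemma Pc_mem: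
  assumes "norm \<nu> = 1" "y \<in> Pc \<nu> n w H k"
  shows "real k * w < y \<bullet> perp \<nu> + real n * w / 2 \<and> y \<bullet> perp \<nu> + real n * w / 2 < (real k + 1) * w \<and> \<bar>y \<bullet> \<nu>\<bar> < H/2"
proof -
  have d1: "(y - ck \<nu> n w k) \<bullet> perp \<nu> = y \<bullet> perp \<nu> - ((real k + 1/2) * w - real n * w / 2)"
    using perp_self[OF assms(1)] by (simp add: ck_def inner_diff_left)
  have d2: "(y - ck \<nu> n w k) \<bullet> \<nu> = y \<bullet> \<nu>"
    by (simp add: ck_def inner_diff_left)
  have "\<bar>(y - ck \<nu> n w k) \<bullet> perp \<nu>\<bar> < w/2" "\<bar>(y - ck \<nu> n w k) \<bullet> \<nu>\<bar> < H/2"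
    using assms(2) by (simp_all add: Pc_def rect_def)
  then have "\<bar>y \<bullet> perp \<nu> - ((real k + 1/2) * w - real n * w / 2)\<bar> < w/2" "\<bar>y \<bullet> \<nu>\<bar> < H/2"
    unfolding d1 d2 .
  then show ?thesis unfolding abs_less_iff by (simp add: algebra_simps)
qed

lemma Pc_sub:
  assumes "norm \<nu> = 1" "k < n" "w > 0"
  shows "Pc \<nu> n w H k \<subseteq> rect \<nu> (real n * w) H"
proof
  fix y assume y: "y \<in> Pc \<nu> n w H k"
  have "real k * w \<ge> 0" using assms by simp
  moreover have "(real k + 1) * w \<le> real n * w" using assms by (intro mult_right_mono) auto
  ultimately show "y \<in> rect \<nu> (real n * w) H"
    using Pc_mem[OF assms(1) y] by (auto simp: rect_def abs_less_iff)
qed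

lemma Pc_disj:
  assumes "norm \<nu> = 1" "k \<noteq> k'" "w > 0"
  shows "Pc \<nu> n w H k \<inter> Pc \<nu> n w H k' = {}"
proof (rule ccontr)
  assume "Pc \<nu> n w H k \<inter> Pc \<nu> n w H k' \<noteq> {}"
  then obtain y where y: "y \<in> Pc \<nu> n w H k" "y \<in> Pc \<nu> n w H k'" by blast
  note a = Pc_mem[OF assms(1) y(1)] and b = Pc_mem[OF assms(1) y(2)]
  show False
  proof (cases "k < k'")
    case True
    then have "real k + 1 \<le> real k'" by simp
    then have "(real k + 1) * w \<le> real k' * w" using assms(3) by (intro mult_right_mono) auto
    then show False using a b by linarith
  next
    case False
    then have "real k' + 1 \<le> real k" using assms(2) by simp
    then have "(real k' + 1) * w \<le> real k * w" using assms(3) by (intro mult_right_mono) auto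
    then show False using a b by linarith
  qed
qed

lemma triA_mono: "A \<subseteq> A' \<Longrightarrow> triA eps A \<subseteq> triA eps A'"
  by (auto simp: triA_def)

lemma sum_pieces:
  assumes eps: "eps > 0" and nu: "norm \<nu> = 1" and w: "w > 0"
  shows "(\<Sum>k<n. FA eps u (Pc \<nu> n w H k)) \<le> FA eps u (rect \<nu> (real n * w) H)"
proof -
  let ?B = "rect \<nu> (real n * w) H"
  have finB: "finite (triA eps ?B)" by (rule triA_finite_rect[OF eps nu])
  have sub: "triA eps (Pc \<nu> n w H k) \<subseteq> triA eps ?B" if "k < n" for k
    by (rule triA_mono[OF Pc_sub[OF nu that w]])
  have fin: "\<forall>k\<in>{..<n}. finite (triA eps (Pc \<nu> n w H k))" using sub finB finite_subset by blast
  have disj: "\<forall>k\<in>{..<n}. \<forall>k'\<in>{..<n}. k \<noteq> k' \<longrightarrow> triA eps (Pc \<nu> n w H k) \<inter> triA eps (Pc \<nu> n w H k') = {}"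
  proof (intro ballI impI)
    fix k k' :: nat assume kk: "k \<noteq> k'"
    show "triA eps (Pc \<nu> n w H k) \<inter> triA eps (Pc \<nu> n w H k') = {}"
    proof (rule ccontr)
      assume "triA eps (Pc \<nu> n w H k) \<inter> triA eps (Pc \<nu> n w H k') \<noteq> {}"
      then obtain t where t: "t \<in> triA eps (Pc \<nu> n w H k)" "t \<in> triA eps (Pc \<nu> n w H k')" by blast
      obtain i j l where tt: "t = (i,j,l)" by (cases t) auto
      have "eps *\<^sub>R i \<in> Pc \<nu> n w H k" "eps *\<^sub>R i \<in> Pc \<nu> n w H k'"
        using t tt triangle_vertices[of eps i j l] by (auto simp: triA_def)
      then show False using Pc_disj[OF nu kk w] by blast
    qed
  qed
  have "(\<Sum>k<n. FA eps u (Pc \<nu> n w H k)) = (\<Sum>t\<in>(\<Union>k\<in>{..<n}. triA eps (Pc \<nu> n w H k)). FT eps u t)"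
    unfolding FA_def by (rule sum.UNION_disjoint[OF _ fin disj, symmetric]) simp
  also have "\<dots> \<le> (\<Sum>t\<in>triA eps ?B. FT eps u t)"
    by (rule sum_mono2[OF finB]) (use sub eps FT_nonneg in auto)
  finally show ?thesis unfolding FA_def .
qed

lemma ck_nu: "ck \<nu> n w k \<bullet> \<nu> = 0" by (simp add: ck_def)

lemma glue_mem:
  assumes nu: "norm \<nu> = 1" and n: "n \<ge> 1" and l: "l > 0" and h: "h > 0" and eta: "\<eta> > 0"
    and H: "H \<ge> h + 2 * \<eta>" and s: "s \<in> Iset \<nu> (real n * (l + 2 * \<eta>)) H"
  shows "\<exists>s'\<in>Iset \<nu> l h. ereal (real n) * s' \<le> s"
proof -
  define w where "w = l + 2 * \<eta>"
  have w: "w > 0" using l eta by (simp add: w_def)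
  define B where "B = rect \<nu> (real n * w) H"
  define R where "R = rect \<nu> l h"
  obtain eps u where s_eq: "s = liminf (\<lambda>m. ereal (FA (eps m) (u m) B))"
    and e0: "\<And>m. eps m > 0" and el: "eps \<longlonglongrightarrow> 0" and sf: "\<And>m. spin_field (eps m) (u m)"
    and er: "(\<lambda>m. errI (eps m) (u m) \<nu> B) \<longlonglongrightarrow> 0"
    using s unfolding Iset_def B_def w_def by blast
  let ?P = "Pc \<nu> n w H"
  define Q where "Q m p \<longleftrightarrow> fst p < n \<and> snd p \<in> Lat1 \<and> norm (eps m *\<^sub>R snd p - ck \<nu> n w (fst p)) \<le> 5 * eps m
      \<and> (\<forall>k'<n. FA (eps m) (u m) (?P (fst p)) \<le> FA (eps m) (u m) (?P k'))" for m p
  have ex: "\<exists>p. Q m p" for m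
  proof -
    let ?f = "\<lambda>k. FA (eps m) (u m) (?P k)"
    have "0 \<in> {..<n}" using n by simp
    then have ne: "?f ` {..<n} \<noteq> {}" by blast
    have "Min (?f ` {..<n}) \<in> ?f ` {..<n}" by (rule Min_in) (use ne in auto)
    then obtain k where k: "k < n" "?f k = Min (?f ` {..<n})" by auto
    have kmin: "\<forall>k'<n. ?f k \<le> ?f k'" using k(2) by auto
    obtain \<sigma> where \<sigma>: "\<sigma> \<in> Lat1" "norm (\<sigma> - (1 / eps m) *\<^sub>R ck \<nu> n w k) \<le> 5"
      using Lat1_cover by blast
    have "eps m *\<^sub>R \<sigma> - ck \<nu> n w k = eps m *\<^sub>R (\<sigma> - (1 / eps m) *\<^sub>R ck \<nu> n w k)"
      using e0[of m] by (simp add: algebra_simps)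
    then have "norm (eps m *\<^sub>R \<sigma> - ck \<nu> n w k) = eps m * norm (\<sigma> - (1 / eps m) *\<^sub>R ck \<nu> n w k)"
      using e0[of m] by simp
    also have "\<dots> \<le> eps m * 5" using \<sigma>(2) e0[of m] by (intro mult_left_mono) auto
    finally have "Q m (k, \<sigma>)" using k(1) kmin \<sigma>(1) by (simp add: Q_def mult.commute)
    then show ?thesis by blast
  qed
  have "\<forall>m. \<exists>p. Q m p" using ex by blast
  then have "\<exists>F. \<forall>m. Q m (F m)" by (rule choice)
  then obtain F where F0: "\<forall>m. Q m (F m)" by blast
  have F: "fst (F m) < n \<and> snd (F m) \<in> Lat1 \<and> norm (eps m *\<^sub>R snd (F m) - ck \<nu> n w (fst (F m))) \<le> 5 * eps m
      \<and> (\<forall>k'<n. FA (eps m) (u m) (?P (fst (F m))) \<le> FA (eps m) (u m) (?P k'))" for m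
    using F0 unfolding Q_def by blast
  define K where "K m = fst (F m)" for m
  define S where "S m = snd (F m)" for m
  have K: "K m < n" and S: "S m \<in> Lat1" and dS: "norm (eps m *\<^sub>R S m - ck \<nu> n w (K m)) \<le> 5 * eps m"
    and Kmin: "\<And>k'. k' < n \<Longrightarrow> FA (eps m) (u m) (?P (K m)) \<le> FA (eps m) (u m) (?P k')" for m
    using F[of m] by (auto simp: K_def S_def)
  define v where "v m = (\<lambda>z. u m (z + eps m *\<^sub>R S m))" for m
  have ev: "\<forall>\<^sub>F m in sequentially. eps m < \<eta> / 5"
    by (rule order_tendstoD(2)[OF el]) (use eta in simp)
  have contain: "(\<lambda>x. eps m *\<^sub>R S m + x) ` R \<subseteq> ?P (K m)" if m: "eps m < \<eta> / 5" for m
  proof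
    fix y assume "y \<in> (\<lambda>x. eps m *\<^sub>R S m + x) ` R"
    then obtain x where x: "x \<in> R" "y = eps m *\<^sub>R S m + x" by blast
    define \<delta> where "\<delta> = eps m *\<^sub>R S m - ck \<nu> n w (K m)"
    have nd: "norm \<delta> < \<eta>" using dS[of m] m by (simp add: \<delta>_def)
    have a1: "\<bar>\<delta> \<bullet> perp \<nu>\<bar> \<le> norm \<delta>" using Cauchy_Schwarz_ineq2[of \<delta> "perp \<nu>"] nu by simp
    have a2: "\<bar>\<delta> \<bullet> \<nu>\<bar> \<le> norm \<delta>" using Cauchy_Schwarz_ineq2[of \<delta> \<nu>] nu by simp
    have yx: "y - ck \<nu> n w (K m) = x + \<delta>" by (simp add: x(2) \<delta>_def algebra_simps)
    have "\<bar>x \<bullet> perp \<nu>\<bar> < l/2" "\<bar>x \<bullet> \<nu>\<bar> < h/2" using x(1) by (auto simp: R_def rect_def)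
    moreover have "\<bar>(x + \<delta>) \<bullet> perp \<nu>\<bar> \<le> \<bar>x \<bullet> perp \<nu>\<bar> + \<bar>\<delta> \<bullet> perp \<nu>\<bar>"
      unfolding inner_add_left by (rule abs_triangle_ineq)
    moreover have "\<bar>(x + \<delta>) \<bullet> \<nu>\<bar> \<le> \<bar>x \<bullet> \<nu>\<bar> + \<bar>\<delta> \<bullet> \<nu>\<bar>"
      unfolding inner_add_left by (rule abs_triangle_ineq)
    ultimately have "\<bar>(x + \<delta>) \<bullet> perp \<nu>\<bar> < w/2" "\<bar>(x + \<delta>) \<bullet> \<nu>\<bar> < H/2"
      using a1 a2 nd H by (simp_all add: w_def)
    then show "y \<in> ?P (K m)" by (simp add: Pc_def rect_def yx)
  qed
  have PB: "?P (K m) \<subseteq> B" for m unfolding B_def by (rule Pc_sub[OF nu K w])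
  have finP: "finite (triA (eps m) (?P (K m)))" for m
    using triA_mono[OF PB[of m]] triA_finite_rect[OF e0 nu] finite_subset unfolding B_def by blast
  have FAv: "real n * FA (eps m) (v m) R \<le> FA (eps m) (u m) B" if m: "eps m < \<eta> / 5" for m
  proof -
    have "FA (eps m) (v m) R \<le> FA (eps m) (u m) (?P (K m))"
      unfolding v_def by (rule FA_shift_le[OF e0 S contain[OF m] finP])
    then have "real n * FA (eps m) (v m) R \<le> real n * FA (eps m) (u m) (?P (K m))"
      by (intro mult_left_mono) auto
    also have "\<dots> \<le> (\<Sum>k<n. FA (eps m) (u m) (?P k))"
      using sum_bounded_below[of "{..<n}" "FA (eps m) (u m) (?P (K m))" "\<lambda>k. FA (eps m) (u m) (?P k)"] Kmin by simp
    also have "\<dots> \<le> FA (eps m) (u m) B" unfolding B_def by (rule sum_pieces[OF e0 nu w])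
    finally show ?thesis .
  qed
  define r where "r m = (eps m *\<^sub>R S m) \<bullet> \<nu>" for m
  have rb: "norm (r m) \<le> 5 * eps m" for m
  proof -
    have "r m = (eps m *\<^sub>R S m - ck \<nu> n w (K m)) \<bullet> \<nu>" by (simp add: r_def inner_diff_left ck_nu)
    then have "\<bar>r m\<bar> \<le> norm (eps m *\<^sub>R S m - ck \<nu> n w (K m))"
      using Cauchy_Schwarz_ineq2[of "eps m *\<^sub>R S m - ck \<nu> n w (K m)" \<nu>] nu by simp
    then show ?thesis using dS[of m] by simp
  qed
  have r0: "r \<longlonglongrightarrow> 0"
    by (rule Lim_null_comparison[OF always_eventually[OF allI[OF rb]]])
       (use tendsto_mult[OF tendsto_const[of 5] el] in simp)
  have nu0: "\<nu> \<noteq> 0" using nu by auto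
  have Rb: "bounded R" unfolding R_def using rect_bounded[OF nu] bounded_cball bounded_subset by blast
  have Rm: "R \<in> sets borel" unfolding R_def by (rule borel_open[OF rect_open])
  have Bm: "B \<in> sets borel" unfolding B_def by (rule borel_open[OF rect_open])
  have strip: "(\<lambda>m. emeasure lborel (R \<inter> {x. \<bar>x \<bullet> \<nu>\<bar> \<le> \<bar>r m\<bar>})) \<longlonglongrightarrow> 0"
    by (rule strip_limit[OF nu0 Rb Rm r0])
  have errv: "(\<lambda>m. errI (eps m) (v m) \<nu> R) \<longlonglongrightarrow> 0"
  proof (rule tendsto_sandwich[of "\<lambda>_. 0" _ _ "\<lambda>m. errI (eps m) (u m) \<nu> B + 2 * emeasure lborel (R \<inter> {x. \<bar>x \<bullet> \<nu>\<bar> \<le> \<bar>r m\<bar>})"])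
    show "\<forall>\<^sub>F m in sequentially. 0 \<le> errI (eps m) (v m) \<nu> R" by simp
    show "\<forall>\<^sub>F m in sequentially. errI (eps m) (v m) \<nu> R \<le> errI (eps m) (u m) \<nu> B + 2 * emeasure lborel (R \<inter> {x. \<bar>x \<bullet> \<nu>\<bar> \<le> \<bar>r m\<bar>})"
    proof (rule eventually_mono[OF ev])
      fix m assume m: "eps m < \<eta> / 5"
      have "(\<lambda>x. eps m *\<^sub>R S m + x) ` R \<subseteq> B" using contain[OF m] PB by blast
      then show "errI (eps m) (v m) \<nu> R \<le> errI (eps m) (u m) \<nu> B + 2 * emeasure lborel (R \<inter> {x. \<bar>x \<bullet> \<nu>\<bar> \<le> \<bar>r m\<bar>})"
        unfolding errI_def v_def r_def by (rule err_shift[OF e0 S _ Rm Bm])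
    qed
    show "(\<lambda>_. 0) \<longlonglongrightarrow> (0::ennreal)" by simp
    have "(\<lambda>m. errI (eps m) (u m) \<nu> B + 2 * emeasure lborel (R \<inter> {x. \<bar>x \<bullet> \<nu>\<bar> \<le> \<bar>r m\<bar>})) \<longlonglongrightarrow> 0 + 2 * 0"
      by (intro tendsto_add er ennreal_tendsto_cmult strip) simp
    then show "(\<lambda>m. errI (eps m) (u m) \<nu> B + 2 * emeasure lborel (R \<inter> {x. \<bar>x \<bullet> \<nu>\<bar> \<le> \<bar>r m\<bar>})) \<longlonglongrightarrow> 0" by simp
  qed
  have sfv: "spin_field (eps m) (v m)" for m
    unfolding spin_field_def
  proof
    fix x assume x: "x \<in> Lat"
    have "v m (eps m *\<^sub>R x) = u m (eps m *\<^sub>R (x + S m))" by (simp add: v_def scaleR_add_right)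
    then show "norm (v m (eps m *\<^sub>R x)) = 1" using sf[of m] Lat_add[OF x S] by (simp add: spin_field_def)
  qed
  define s' where "s' = liminf (\<lambda>m. ereal (FA (eps m) (v m) R))"
  have s'I: "s' \<in> Iset \<nu> l h"
    unfolding s'_def R_def by (rule IsetI[OF e0 el sfv]) (use errv in \<open>simp add: R_def\<close>)
  have "ereal (real n) * s' = liminf (\<lambda>m. ereal (real n) * ereal (FA (eps m) (v m) R))"
    unfolding s'_def by (rule Liminf_ereal_mult_left[symmetric]) auto
  also have "\<dots> \<le> s" unfolding s_eq
  proof (rule Liminf_mono)
    show "\<forall>\<^sub>F m in sequentially. ereal (real n) * ereal (FA (eps m) (v m) R) \<le> ereal (FA (eps m) (u m) B)"
    proof (rule eventually_mono[OF ev])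
      fix m assume "eps m < \<eta> / 5"
      then show "ereal (real n) * ereal (FA (eps m) (v m) R) \<le> ereal (FA (eps m) (u m) B)" using FAv[of m] by simp
    qed
  qed
  finally show ?thesis using s'I by blast
qed

lemma key_ineq:
  assumes nu: "norm \<nu> = 1" and l: "l > 0" and h: "h > 0" and l': "l' > 0" and h': "h' > 0" and eta: "\<eta> > 0"
  shows "Inf (Iset \<nu> l h) \<le> ereal ((l + 2 * \<eta>) / l') * Inf (Iset \<nu> l' h')"
proof -
  define w where "w = l + 2 * \<eta>"
  have w: "w > 0" using l eta by (simp add: w_def)
  define n where "n = nat \<lceil>(h + 2 * \<eta>) * l' / (w * h')\<rceil> + 1"
  have n1: "n \<ge> 1" by (simp add: n_def)
  have nge: "real n \<ge> (h + 2 * \<eta>) * l' / (w * h')"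
  proof -
    have "(h + 2 * \<eta>) * l' / (w * h') \<le> real_of_int \<lceil>(h + 2 * \<eta>) * l' / (w * h')\<rceil>" by (rule le_of_int_ceiling)
    also have "\<dots> \<le> real (nat \<lceil>(h + 2 * \<eta>) * l' / (w * h')\<rceil>)" by linarith
    also have "\<dots> \<le> real n" by (simp add: n_def)
    finally show ?thesis .
  qed
  define c where "c = real n * w / l'"
  have c: "c > 0" using n1 w l' by (simp add: c_def)
  define H where "H = c * h'"
  have cl: "c * l' = real n * w" using l' by (simp add: c_def)
  have H: "H \<ge> h + 2 * \<eta>"
  proof -
    have "h + 2 * \<eta> = (h + 2 * \<eta>) * l' / (w * h') * (w * h' / l')" using w h' l' by (simp add: field_simps)
    also have "\<dots> \<le> real n * (w * h' / l')" using nge w h' l' by (intro mult_right_mono) auto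
    also have "\<dots> = H" by (simp add: H_def c_def)
    finally show ?thesis .
  qed
  define K where "K = w / l'"
  have K: "K > 0" using w l' by (simp add: K_def)
  define I where "I = Inf (Iset \<nu> l h)"
  have all: "I \<le> ereal K * s" if s: "s \<in> Iset \<nu> l' h'" for s
  proof -
    have "ereal c * s \<in> Iset \<nu> (c * l') (c * h')" by (rule scale_mem[OF c nu s])
    then have "ereal c * s \<in> Iset \<nu> (real n * (l + 2 * \<eta>)) H" unfolding cl H_def w_def .
    then obtain s' where s': "s' \<in> Iset \<nu> l h" "ereal (real n) * s' \<le> ereal c * s"
      using glue_mem[OF nu n1 l h eta H] by blast
    have "I \<le> s'" unfolding I_def using s'(1) by (rule Inf_lower)
    then have "ereal (real n) * I \<le> ereal (real n) * s'" by (rule ereal_mult_left_mono) simp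
    also have "\<dots> \<le> ereal c * s" by (rule s'(2))
    finally have nI: "ereal (real n) * I \<le> ereal c * s" .
    have "I = ereal (1 / real n) * (ereal (real n) * I)"
      using n1 by (simp add: mult.assoc[symmetric])
    also have "\<dots> \<le> ereal (1 / real n) * (ereal c * s)" by (rule ereal_mult_left_mono[OF nI]) simp
    also have "\<dots> = ereal K * s"
      using n1 l' by (simp add: mult.assoc[symmetric] K_def c_def)
    finally show ?thesis .
  qed
  have "ereal (1 / K) * I \<le> Inf (Iset \<nu> l' h')"
  proof (rule Inf_greatest)
    fix s assume s: "s \<in> Iset \<nu> l' h'"
    have "ereal (1 / K) * I \<le> ereal (1 / K) * (ereal K * s)" by (rule ereal_mult_left_mono[OF all[OF s]]) (use K in simp)
    also have "\<dots> = s" using K by (simp add: mult.assoc[symmetric])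
    finally show "ereal (1 / K) * I \<le> s" .
  qed
  then have "ereal K * (ereal (1 / K) * I) \<le> ereal K * Inf (Iset \<nu> l' h')" by (rule ereal_mult_left_mono) (use K in simp)
  moreover have "ereal K * (ereal (1 / K) * I) = I" using K by (simp add: mult.assoc[symmetric])
  ultimately show ?thesis unfolding I_def K_def w_def by simp
qed

lemma psi_le:
  assumes nu: "norm \<nu> = 1" and l: "l > 0" and h: "h > 0" and l': "l' > 0" and h': "h' > 0"
  shows "psi l h \<nu> \<le> psi l' h' \<nu>"
proof -
  define J where "J = Inf (Iset \<nu> l' h')"
  have J0: "J \<ge> 0" unfolding J_def by (rule Inf_Iset_nonneg)
  have bound: "psi l h \<nu> \<le> ereal ((l + 2 * \<eta>) / l) * psi l' h' \<nu>" if eta: "\<eta> > 0" for \<eta>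
  proof -
    have "psi l h \<nu> = ereal (1 / l) * Inf (Iset \<nu> l h)" by (rule psi_Iset)
    also have "\<dots> \<le> ereal (1 / l) * (ereal ((l + 2 * \<eta>) / l') * J)"
      unfolding J_def by (rule ereal_mult_left_mono[OF key_ineq[OF nu l h l' h' eta]]) (use l in simp)
    also have "\<dots> = ereal ((l + 2 * \<eta>) / l) * (ereal (1 / l') * J)"
    proof -
      have "ereal (1 / l) * (ereal ((l + 2 * \<eta>) / l') * J) = (ereal (1 / l) * ereal ((l + 2 * \<eta>) / l')) * J"
        by (rule mult.assoc[symmetric])
      also have "ereal (1 / l) * ereal ((l + 2 * \<eta>) / l') = ereal ((l + 2 * \<eta>) / l) * ereal (1 / l')" by simp
      also have "(ereal ((l + 2 * \<eta>) / l) * ereal (1 / l')) * J = ereal ((l + 2 * \<eta>) / l) * (ereal (1 / l') * J)"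
        by (rule mult.assoc)
      finally show ?thesis .
    qed
    also have "\<dots> = ereal ((l + 2 * \<eta>) / l) * psi l' h' \<nu>" by (simp add: psi_Iset J_def)
    finally show ?thesis .
  qed
  show ?thesis
  proof (cases J)
    case PInf
    then have "psi l' h' \<nu> = \<infinity>" using l' by (simp add: psi_Iset J_def[symmetric])
    then show ?thesis by simp
  next
    case MInf
    then show ?thesis using J0 by simp
  next
    case (real j)
    define p where "p = j / l'"
    have p0: "p \<ge> 0" using J0 real l' by (simp add: p_def)
    have pe: "psi l' h' \<nu> = ereal p" using real by (simp add: psi_Iset J_def[symmetric] p_def)
    have b: "psi l h \<nu> \<le> ereal ((l + 2 * \<eta>) / l * p)" if "\<eta> > 0" for \<eta>
      using bound[OF that] by (simp add: pe)
    show ?thesis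
    proof (cases "psi l h \<nu>")
      case PInf
      then show ?thesis using b[of 1] by simp
    next
      case MInf
      then show ?thesis by simp
    next
      case (real q)
      have "q \<le> p"
      proof (rule field_le_epsilon)
        fix e :: real assume e: "0 < e"
        define \<eta> where "\<eta> = e * l / (2 * (p + 1))"
        have eta: "\<eta> > 0" using e l p0 by (simp add: \<eta>_def)
        have "q \<le> (l + 2 * \<eta>) / l * p" using b[OF eta] real by simp
        also have "(l + 2 * \<eta>) / l * p = p + e * p / (p + 1)"
        proof -
          have p1: "p + 1 > 0" using p0 by simp
          have a: "2 * \<eta> = e * l / (p + 1)" unfolding \<eta>_def using p1 by (simp add: field_simps)
          have b: "l + e * l / (p + 1) = l * (1 + e / (p + 1))" by (simp add: algebra_simps)
          have "(l + 2 * \<eta>) / l = 1 + e / (p + 1)" unfolding a b using l by simp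
          then show ?thesis by (simp add: distrib_right)
        qed
        also have "e * p / (p + 1) \<le> e"
          using e p0 by (simp add: field_simps)
        finally show "q \<le> p + e" by simp
      qed
      then show ?thesis using real pe by simp
    qed
  qed
qed

theorem lemma4p3:
  fixes \<nu> :: pt
  assumes "norm \<nu> = 1"
  shows "\<forall>l h l' h'. l > 0 \<and> h > 0 \<and> l' > 0 \<and> h' > 0 \<longrightarrow> psi l h \<nu> = psi l' h' \<nu>"
  using psi_le[OF assms] by (meson antisym)

end
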